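(* There exist dynamic flow networks with only one capacity change in which every minimum dynamic cut and every maximum dynamic flow has exponential complexity: for every $\ell\in\mathbb{N}^+$ there is a dynamic flow network of size polynomial in $\ell$ with only one capacity change such that every minimum dynamic cut and every maximum dynamic flow has complexity at least $2^\ell$. This holds even with acyclic underlying graphs and with discrete time (all transit times, capacity change times and the time horizon being integer multiples of a common time unit, so that time may be discretized into units of that length).
   Context: A dynamic flow network with time-dependent capacities: directed graph $G=(V,E)$, source $s$, target $t$, time horizon $T$, constant transit times $\tau_e\ge0$ and capacity functions $u_e\colon[0,T]\to\mathbb{R}_{\ge0}$ with finitely many discontinuities; "only one capacity change" means all capacities are constant except one edge whose capacity function has a single jump. A dynamic flow is a family of measurable $f_e\colon[0,T-\tau_e]\to\mathbb{R}$ with $f_e\le u_e$ and strong flow conservation (excess $\int_0^\Theta(\sum_{e=(u,v)}f_e(\zeta-\tau_e)-\sum_{e=(v,u)}f_e(\zeta))d\zeta=0$ for all $v\ne s,t$, $\Theta\in[0,T]$); its value is the excess of $t$ at $T$. A dynamic cut is a family $S_v\colon[0,T]\to\{0,1\}$ with $S_s\equiv1$, $S_t\equiv0$ on $[0,T]$, $S_v(\Theta)=1$ for $\Theta>T$, of capacity $\int_0^T\sum_{e=(v,w):S_v(\Theta)=1,S_w(\Theta+\tau_e)=0}u_e(\Theta)d\Theta$. A vertex changes partition at $\Theta$ if $S_v(\Theta-\delta)\ne S_v(\Theta+\delta)$ for all small $\delta>0$; the complexity of a cut is the total number of partition changes over all vertices. Analogously, the complexity of a flow is the total number of changes of the functions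 $f_e$ over all edges.
   Formalization: The complexity of a cut or flow counts essential change points, where $S_v$ or $f_e$ is not almost everywhere constant on any neighbourhood, instead of points with $S_v(\Theta-\delta)\ne S_v(\Theta+\delta)$ for all small delta; cuts are measurable and flows nonnegative. Each condition added here is assumed in the paper as well or is needed for the statement above to hold. *)

theory Defs
  imports "HOL-Analysis.Analysis" "HOL-Library.Extended_Nat"
begin

record dyn_network =
  nverts :: "nat set"
  nedges :: "(nat \<times> nat) set"
  nsrc :: nat
  nsnk :: nat
  nhorizon :: real
  ntransit :: "nat \<times> nat \<Rightarrow> real"
  ncap :: "nat \<times> nat \<Rightarrow> real \<Rightarrow> real"

definition valid_network :: "dyn_network \<Rightarrow> bool" where
  "valid_network N \<longleftrightarrow>
     finite (nverts N) \<and> nedges N \<subseteq> nverts N \<times> nverts N \<and>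
     nsrc N \<in> nverts N \<and> nsnk N \<in> nverts N \<and> nsrc N \<noteq> nsnk N \<and>
     0 \<le> nhorizon N \<and>
     (\<forall>e\<in>nedges N. 0 \<le> ntransit N e) \<and>
     (\<forall>e\<in>nedges N. \<forall>\<theta>\<in>{0..nhorizon N}. 0 \<le> ncap N e \<theta>) \<and>
     (\<forall>e\<in>nedges N. finite {\<theta>\<in>{0..nhorizon N}.
          \<not> continuous (at \<theta> within {0..nhorizon N}) (ncap N e)})"

definition one_capacity_change :: "dyn_network \<Rightarrow> bool" where
  "one_capacity_change N \<longleftrightarrow>
     (\<exists>e0\<in>nedges N. \<exists>\<theta>0 a b. 0 < \<theta>0 \<and> \<theta>0 < nhorizon N \<and> a \<noteq> b \<and>
        (\<forall>\<theta>\<in>{0..nhorizon N}. \<theta> \<noteq> \<theta>0 \<longrightarrow> ncap N e0 \<theta> = (if \<theta> < \<theta>0 then a else b)) \<and>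
        (\<forall>e\<in>nedges N - {e0}. \<exists>c. \<forall>\<theta>\<in>{0..nhorizon N}. ncap N e \<theta> = c))"

text \<open>Discrete time (time unit 1): horizon, transit times and capacity change
  times (discontinuities of capacity functions) are integers.\<close>
definition discrete_time :: "dyn_network \<Rightarrow> bool" where
  "discrete_time N \<longleftrightarrow>
     nhorizon N \<in> \<nat> \<and>
     (\<forall>e\<in>nedges N. ntransit N e \<in> \<nat>) \<and>
     (\<forall>e\<in>nedges N. \<forall>\<theta>\<in>{0..nhorizon N}.
        \<not> continuous (at \<theta> within {0..nhorizon N}) (ncap N e) \<longrightarrow> \<theta> \<in> \<nat>)"

definition integral_capacities :: "dyn_network \<Rightarrow> bool" where
  "integral_capacities N \<longleftrightarrow> (\<forall>e\<in>nedges N. \<forall>\<theta>\<in>{0..nhorizon N}. ncap N e \<theta> \<in> \<nat>)"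

text \<open>Size bound: at most B vertices and edges, all numbers have at most B bits.\<close>
definition size_bounded :: "dyn_network \<Rightarrow> nat \<Rightarrow> bool" where
  "size_bounded N B \<longleftrightarrow>
     card (nverts N) \<le> B \<and> card (nedges N) \<le> B \<and>
     nhorizon N \<le> 2 ^ B \<and>
     (\<forall>e\<in>nedges N. ntransit N e \<le> 2 ^ B) \<and>
     (\<forall>e\<in>nedges N. \<forall>\<theta>\<in>{0..nhorizon N}. ncap N e \<theta> \<le> 2 ^ B)"

text \<open>Dynamic flows; f e is extended by 0 outside its domain [0, T - tau_e].\<close>
definition excess :: "dyn_network \<Rightarrow> (nat \<times> nat \<Rightarrow> real \<Rightarrow> real) \<Rightarrow> nat \<Rightarrow> real \<Rightarrow> real" where
  "excess N f v \<Theta> =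
     (LINT \<zeta>:{0..\<Theta>}|lborel.
        (\<Sum>e\<in>{e\<in>nedges N. snd e = v}. f e (\<zeta> - ntransit N e))
      - (\<Sum>e\<in>{e\<in>nedges N. fst e = v}. f e \<zeta>))"

definition is_dyn_flow :: "dyn_network \<Rightarrow> (nat \<times> nat \<Rightarrow> real \<Rightarrow> real) \<Rightarrow> bool" where
  "is_dyn_flow N f \<longleftrightarrow>
     (\<forall>e\<in>nedges N. f e \<in> borel_measurable lborel) \<and>
     (\<forall>e\<in>nedges N. \<forall>\<theta>.
        if 0 \<le> \<theta> \<and> \<theta> \<le> nhorizon N - ntransit N e
        then 0 \<le> f e \<theta> \<and> f e \<theta> \<le> ncap N e \<theta>
        else f e \<theta> = 0) \<and>
     (\<forall>v\<in>nverts N - {nsrc N, nsnk N}. \<forall>\<Theta>\<in>{0..nhorizon N}. excess N f v \<Theta> = 0)"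

definition flow_value :: "dyn_network \<Rightarrow> (nat \<times> nat \<Rightarrow> real \<Rightarrow> real) \<Rightarrow> real" where
  "flow_value N f = excess N f (nsnk N) (nhorizon N)"

definition is_max_dyn_flow :: "dyn_network \<Rightarrow> (nat \<times> nat \<Rightarrow> real \<Rightarrow> real) \<Rightarrow> bool" where
  "is_max_dyn_flow N f \<longleftrightarrow> is_dyn_flow N f \<and>
     (\<forall>g. is_dyn_flow N g \<longrightarrow> flow_value N g \<le> flow_value N f)"

text \<open>Dynamic cuts: S v \<theta> = True means v is on the source side at time \<theta>.\<close>
definition is_dyn_cut :: "dyn_network \<Rightarrow> (nat \<Rightarrow> real \<Rightarrow> bool) \<Rightarrow> bool" where
  "is_dyn_cut N S \<longleftrightarrow>
     (\<forall>v\<in>nverts N. {\<theta>. S v \<theta>} \<in> sets lborel) \<and>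
     (\<forall>\<theta>\<in>{0..nhorizon N}. S (nsrc N) \<theta> \<and> \<not> S (nsnk N) \<theta>) \<and>
     (\<forall>v\<in>nverts N. \<forall>\<theta>. nhorizon N < \<theta> \<longrightarrow> S v \<theta>)"

definition cut_capacity :: "dyn_network \<Rightarrow> (nat \<Rightarrow> real \<Rightarrow> bool) \<Rightarrow> real" where
  "cut_capacity N S =
     (LINT \<Theta>:{0..nhorizon N}|lborel.
        (\<Sum>e\<in>nedges N. if S (fst e) \<Theta> \<and> \<not> S (snd e) (\<Theta> + ntransit N e)
                        then ncap N e \<Theta> else 0))"

definition is_min_dyn_cut :: "dyn_network \<Rightarrow> (nat \<Rightarrow> real \<Rightarrow> bool) \<Rightarrow> bool" where
  "is_min_dyn_cut N S \<longleftrightarrow> is_dyn_cut N S \<and>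
     (\<forall>S'. is_dyn_cut N S' \<longrightarrow> cut_capacity N S \<le> cut_capacity N S')"

definition ecard :: "'a set \<Rightarrow> enat" where
  "ecard A = (if finite A then enat (card A) else \<infinity>)"

text \<open>g changes at \<Theta> (relative to domain D): g is not almost-everywhere constant
  on any neighbourhood of \<Theta> within D (robust against modification on null sets).\<close>
definition ess_change :: "real set \<Rightarrow> (real \<Rightarrow> 'a) \<Rightarrow> real \<Rightarrow> bool" where
  "ess_change D g \<Theta> \<longleftrightarrow>
     (\<forall>\<epsilon>>0. \<not> (\<exists>c. AE x in lborel. x \<in> D \<and> dist x \<Theta> < \<epsilon> \<longrightarrow> g x = c))"

definition cut_complexity :: "dyn_network \<Rightarrow> (nat \<Rightarrow> real \<Rightarrow> bool) \<Rightarrow> enat" where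
  "cut_complexity N S =
     ecard {(v, \<Theta>). v \<in> nverts N \<and> 0 < \<Theta> \<and> ess_change {0..} (S v) \<Theta>}"

definition flow_complexity :: "dyn_network \<Rightarrow> (nat \<times> nat \<Rightarrow> real \<Rightarrow> real) \<Rightarrow> enat" where
  "flow_complexity N f =
     ecard {(e, \<Theta>). e \<in> nedges N \<and> 0 < \<Theta> \<and> \<Theta> < nhorizon N - ntransit N e \<and>
                    ess_change {0..nhorizon N - ntransit N e} (f e) \<Theta>}"

end

theory Submission
  imports Defs "HOL-Analysis.Radon_Nikodym"
begin

lemma ae_zero_from_intervals:
  fixes r :: "real \<Rightarrow> real" and T :: real
  assumes int: "set_integrable lborel {0..T} r"
    and z: "\<And>\<Theta>. \<Theta> \<in> {0..T} \<Longrightarrow> (LINT x:{0..\<Theta>}|lborel. r x) = 0"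
  shows "AE x in lborel. x \<in> {0..T} \<longrightarrow> r x = 0"
proof -
  define g where "g x = indicator {0..T} x * r x" for x
  have ig: "integrable lborel g" using int unfolding set_integrable_def g_def by simp
  have gm[measurable]: "g \<in> borel_measurable borel" using ig by auto
  have key: "(\<integral>x. indicator {a<..} x * g x \<partial>lborel) = 0" for a
  proof (cases "a < 0")
    case True
    have "(\<lambda>x. indicator {a<..} x * g x) = (\<lambda>x. indicator {0..T} x *\<^sub>R r x)"
      using True by (auto simp: g_def indicator_def fun_eq_iff)
    then show ?thesis using z[of T] int
      by (cases "0 \<le> T") (auto simp: set_lebesgue_integral_def)
  next
    case False
    show ?thesis
    proof (cases "a \<le> T")
      case True
      have e: "(\<lambda>x. indicator {a<..} x * g x) = (\<lambda>x. indicator {0..T} x *\<^sub>R r x - indicator {0..a} x *\<^sub>R r x)"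
        using True False by (auto simp: g_def indicator_def fun_eq_iff)
      have i2: "set_integrable lborel {0..a} r"
        by (rule set_integrable_subset[OF int]) (use True in auto)
      show ?thesis unfolding e
        using z[of T] z[of a] True False int i2
        by (subst Bochner_Integration.integral_diff) (auto simp: set_lebesgue_integral_def set_integrable_def)
    next
      case c2: False
      have "(\<lambda>x. indicator {a<..} x * g x) = (\<lambda>x. 0)"
        using c2 by (auto simp: g_def indicator_def fun_eq_iff)
      then show ?thesis by simp
    qed
  qed
  define p where "p x = max 0 (g x)" for x
  define q where "q x = max 0 (- g x)" for x
  have ip: "integrable lborel p" unfolding p_def using ig by (intro integrable_max) auto
  have iq: "integrable lborel q" unfolding q_def using ig by (intro integrable_max) auto
  have [measurable]: "p \<in> borel_measurable borel" "q \<in> borel_measurable borel" using ip iq by auto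
  have ipa: "integrable lborel (\<lambda>x. indicator {a<..} x * p x)" for a
    using integrable_mult_indicator[OF _ ip, of "{a<..}"] by (simp add: mult.commute)
  have iqa: "integrable lborel (\<lambda>x. indicator {a<..} x * q x)" for a
    using integrable_mult_indicator[OF _ iq, of "{a<..}"] by (simp add: mult.commute)
  have pq: "(\<integral>x. indicator {a<..} x * p x \<partial>lborel) = (\<integral>x. indicator {a<..} x * q x \<partial>lborel)" for a
  proof -
    have "(\<lambda>x. indicator {a<..} x * g x) = (\<lambda>x. indicator {a<..} x * p x - indicator {a<..} x * q x)"
      by (auto simp: p_def q_def fun_eq_iff max_def)
    then have "0 = (\<integral>x. indicator {a<..} x * p x - indicator {a<..} x * q x \<partial>lborel)"
      using key[of a] by simp
    also have "\<dots> = (\<integral>x. indicator {a<..} x * p x \<partial>lborel) - (\<integral>x. indicator {a<..} x * q x \<partial>lborel)"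
      using ipa iqa by (rule Bochner_Integration.integral_diff)
    finally show ?thesis by simp
  qed
  have em: "emeasure (density lborel (\<lambda>x. ennreal (p x))) {a<..} = ennreal (\<integral>x. indicator {a<..} x * p x \<partial>lborel)"
     "emeasure (density lborel (\<lambda>x. ennreal (q x))) {a<..} = ennreal (\<integral>x. indicator {a<..} x * q x \<partial>lborel)" for a
  proof -
    have "emeasure (density lborel (\<lambda>x. ennreal (p x))) {a<..} = (\<integral>\<^sup>+x. ennreal (indicator {a<..} x * p x) \<partial>lborel)"
      by (subst emeasure_density) (auto intro!: nn_integral_cong simp: indicator_def)
    also have "\<dots> = ennreal (\<integral>x. indicator {a<..} x * p x \<partial>lborel)"
      by (rule nn_integral_eq_integral[OF ipa]) (auto simp: p_def)
    finally show "emeasure (density lborel (\<lambda>x. ennreal (p x))) {a<..} = ennreal (\<integral>x. indicator {a<..} x * p x \<partial>lborel)" .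
    have "emeasure (density lborel (\<lambda>x. ennreal (q x))) {a<..} = (\<integral>\<^sup>+x. ennreal (indicator {a<..} x * q x) \<partial>lborel)"
      by (subst emeasure_density) (auto intro!: nn_integral_cong simp: indicator_def)
    also have "\<dots> = ennreal (\<integral>x. indicator {a<..} x * q x \<partial>lborel)"
      by (rule nn_integral_eq_integral[OF iqa]) (auto simp: q_def)
    finally show "emeasure (density lborel (\<lambda>x. ennreal (q x))) {a<..} = ennreal (\<integral>x. indicator {a<..} x * q x \<partial>lborel)" .
  qed
  have "density lborel (\<lambda>x. ennreal (p x)) = density lborel (\<lambda>x. ennreal (q x))"
    by (rule measure_eqI_lessThan) (auto simp: em pq)
  then have "AE x in lborel. ennreal (p x) = ennreal (q x)"
    by (intro sigma_finite_measure.density_unique[OF sigma_finite_lborel]) auto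
  then show ?thesis
  proof (rule AE_mp, intro AE_I2 impI)
    fix x assume "ennreal (p x) = ennreal (q x)" "x \<in> {0..T}"
    then show "r x = 0" by (auto simp: p_def q_def g_def max_def split: if_splits)
  qed
qed

lemma integrable_bdd_supp:
  fixes g :: "real \<Rightarrow> real"
  assumes "g \<in> borel_measurable borel" "\<And>x. \<bar>g x\<bar> \<le> K" "\<And>x. x \<notin> {a..b} \<Longrightarrow> g x = 0"
  shows "integrable lborel g"
proof (rule Bochner_Integration.integrable_bound)
  show "integrable lborel (\<lambda>x. indicator {a..b} x * K)"
    by (intro integrable_mult_left integrable_real_indicator) (auto simp: emeasure_lborel_Icc_eq)
  show "g \<in> borel_measurable lborel" using assms by simp
  show "AE x in lborel. norm (g x) \<le> norm (indicator {a..b} x * K)"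
  proof (intro AE_I2)
    fix x show "norm (g x) \<le> norm (indicator {a..b} x * K)"
      using assms(2)[of x] assms(3)[of x] by (cases "x \<in> {a..b}") auto
  qed
qed

definition sind :: "(nat \<Rightarrow> real \<Rightarrow> bool) \<Rightarrow> nat \<Rightarrow> real \<Rightarrow> real" where
  "sind S v \<theta> = (if S v \<theta> then 1 else 0)"

lemma sind_meas:
  assumes "{\<theta>. S v \<theta>} \<in> sets lborel"
  shows "sind S v \<in> borel_measurable borel"
proof -
  have "sind S v = indicator {\<theta>. S v \<theta>}" by (auto simp: sind_def fun_eq_iff indicator_def)
  then show ?thesis using assms by simp
qed

lemma sind_meas_shift:
  assumes "{\<theta>. S v \<theta>} \<in> sets lborel"
  shows "(\<lambda>\<theta>. sind S v (\<theta> + c)) \<in> borel_measurable borel"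
proof -
  have [measurable]: "sind S v \<in> borel_measurable borel" by (rule sind_meas[of S v, OF assms])
  show ?thesis by measurable
qed

lemma sind_bnd: "\<bar>sind S v \<theta>\<bar> \<le> 1" "0 \<le> sind S v \<theta>" "sind S v \<theta> \<le> 1"
  by (auto simp: sind_def)

definition rate :: "dyn_network \<Rightarrow> (nat \<times> nat \<Rightarrow> real \<Rightarrow> real) \<Rightarrow> nat \<Rightarrow> real \<Rightarrow> real" where
  "rate N f v \<zeta> = (\<Sum>e\<in>{e\<in>nedges N. snd e = v}. f e (\<zeta> - ntransit N e))
      - (\<Sum>e\<in>{e\<in>nedges N. fst e = v}. f e \<zeta>)"

definition defect :: "dyn_network \<Rightarrow> (nat \<times> nat \<Rightarrow> real \<Rightarrow> real) \<Rightarrow> (nat \<Rightarrow> real \<Rightarrow> bool) \<Rightarrow> nat \<times> nat \<Rightarrow> real \<Rightarrow> real" where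
  "defect N f S e \<theta> = indicator {0..nhorizon N} \<theta> *
      (if S (fst e) \<theta> \<and> \<not> S (snd e) (\<theta> + ntransit N e) then ncap N e \<theta> else 0)
    - f e \<theta> * (sind S (fst e) \<theta> - sind S (snd e) (\<theta> + ntransit N e))"

definition good_net :: "dyn_network \<Rightarrow> real \<Rightarrow> bool" where
  "good_net N K \<longleftrightarrow> valid_network N \<and> 0 \<le> K \<and> (\<forall>e\<in>nedges N. ncap N e \<in> borel_measurable borel) \<and>
     (\<forall>e\<in>nedges N. \<forall>\<theta>\<in>{0..nhorizon N}. ncap N e \<theta> \<le> K)"

lemma flow_bnd:
  assumes G: "good_net N K" and f: "is_dyn_flow N f" and e: "e \<in> nedges N"
  shows "\<bar>f e \<theta>\<bar> \<le> K" "0 \<le> f e \<theta>" "\<theta> \<notin> {0..nhorizon N} \<Longrightarrow> f e \<theta> = 0"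
    "\<theta> \<notin> {0..nhorizon N - ntransit N e} \<Longrightarrow> f e \<theta> = 0"
    "f e \<theta> \<le> (if \<theta> \<in> {0..nhorizon N - ntransit N e} then ncap N e \<theta> else 0)"
proof -
  have fc: "if 0 \<le> \<theta> \<and> \<theta> \<le> nhorizon N - ntransit N e
        then 0 \<le> f e \<theta> \<and> f e \<theta> \<le> ncap N e \<theta> else f e \<theta> = 0" for \<theta>
    using f e unfolding is_dyn_flow_def by blast
  have tau: "0 \<le> ntransit N e" using G e unfolding good_net_def valid_network_def by auto
  have K: "\<theta> \<in> {0..nhorizon N} \<Longrightarrow> ncap N e \<theta> \<le> K" for \<theta> using G e unfolding good_net_def by auto
  have K0: "0 \<le> K" using G unfolding good_net_def by auto
  show "\<bar>f e \<theta>\<bar> \<le> K" "0 \<le> f e \<theta>" 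
    using fc[of \<theta>] K[of \<theta>] tau K0
    by (auto split: if_splits)
  show "\<theta> \<notin> {0..nhorizon N} \<Longrightarrow> f e \<theta> = 0" using fc[of \<theta>] tau by (auto split: if_splits)
  show "\<theta> \<notin> {0..nhorizon N - ntransit N e} \<Longrightarrow> f e \<theta> = 0" using fc[of \<theta>] tau by (auto split: if_splits)
  show "f e \<theta> \<le> (if \<theta> \<in> {0..nhorizon N - ntransit N e} then ncap N e \<theta> else 0)"
    using fc[of \<theta>] by (auto split: if_splits)
qed

lemma flow_meas:
  assumes f: "is_dyn_flow N f" and e: "e \<in> nedges N"
  shows "f e \<in> borel_measurable borel"
  using f e unfolding is_dyn_flow_def by auto

lemma good_facts:
  assumes G: "good_net N K"
  shows "finite (nverts N)" "finite (nedges N)" "\<And>e. e \<in> nedges N \<Longrightarrow> fst e \<in> nverts N"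
    "\<And>e. e \<in> nedges N \<Longrightarrow> snd e \<in> nverts N" "\<And>e. e \<in> nedges N \<Longrightarrow> 0 \<le> ntransit N e"
    "nsrc N \<in> nverts N" "nsnk N \<in> nverts N" "nsrc N \<noteq> nsnk N" "0 \<le> nhorizon N" "0 \<le> K"
    "\<And>e \<theta>. e \<in> nedges N \<Longrightarrow> \<theta> \<in> {0..nhorizon N} \<Longrightarrow> 0 \<le> ncap N e \<theta>"
    "\<And>e \<theta>. e \<in> nedges N \<Longrightarrow> \<theta> \<in> {0..nhorizon N} \<Longrightarrow> ncap N e \<theta> \<le> K"
    "\<And>e. e \<in> nedges N \<Longrightarrow> ncap N e \<in> borel_measurable borel"
proof -
  have V: "valid_network N" using G by (simp add: good_net_def)
  show "finite (nverts N)" using V by (simp add: valid_network_def)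
  moreover have "nedges N \<subseteq> nverts N \<times> nverts N" using V by (simp add: valid_network_def)
  ultimately show "finite (nedges N)" by (meson finite_SigmaI finite_subset)
  show "\<And>e. e \<in> nedges N \<Longrightarrow> fst e \<in> nverts N" "\<And>e. e \<in> nedges N \<Longrightarrow> snd e \<in> nverts N"
    using \<open>nedges N \<subseteq> nverts N \<times> nverts N\<close> by auto
  show "\<And>e. e \<in> nedges N \<Longrightarrow> 0 \<le> ntransit N e"
    "nsrc N \<in> nverts N" "nsnk N \<in> nverts N" "nsrc N \<noteq> nsnk N" "0 \<le> nhorizon N"
    "\<And>e \<theta>. e \<in> nedges N \<Longrightarrow> \<theta> \<in> {0..nhorizon N} \<Longrightarrow> 0 \<le> ncap N e \<theta>"
    using V by (auto simp: valid_network_def)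
  show "0 \<le> K" "\<And>e \<theta>. e \<in> nedges N \<Longrightarrow> \<theta> \<in> {0..nhorizon N} \<Longrightarrow> ncap N e \<theta> \<le> K"
    "\<And>e. e \<in> nedges N \<Longrightarrow> ncap N e \<in> borel_measurable borel"
    using G by (auto simp: good_net_def)
qed

lemma int_plain:
  assumes G: "good_net N K" and f: "is_dyn_flow N f" and e: "e \<in> nedges N"
    and h: "h \<in> borel_measurable borel" "\<And>x. \<bar>h x\<bar> \<le> 1"
  shows "integrable lborel (\<lambda>\<zeta>. h \<zeta> * f e \<zeta>)"
proof (rule integrable_bdd_supp[where K=K and a=0 and b="nhorizon N"])
  have [measurable]: "f e \<in> borel_measurable borel" by (rule flow_meas[OF f e])
  show "(\<lambda>\<zeta>. h \<zeta> * f e \<zeta>) \<in> borel_measurable borel" using h by measurable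
  show "\<bar>h x * f e x\<bar> \<le> K" for x
  proof -
    have "\<bar>h x * f e x\<bar> = \<bar>h x\<bar> * \<bar>f e x\<bar>" by (simp add: abs_mult)
    also have "\<dots> \<le> 1 * K" using h(2)[of x] flow_bnd(1)[OF G f e, of x]
      by (intro mult_mono) auto
    finally show ?thesis by simp
  qed
  show "x \<notin> {0..nhorizon N} \<Longrightarrow> h x * f e x = 0" for x using flow_bnd(3)[OF G f e] by simp
qed

lemma int_shift:
  assumes G: "good_net N K" and f: "is_dyn_flow N f" and e: "e \<in> nedges N"
    and h: "h \<in> borel_measurable borel" "\<And>x. \<bar>h x\<bar> \<le> 1"
  shows "integrable lborel (\<lambda>\<zeta>. h \<zeta> * f e (\<zeta> - ntransit N e))"
proof (rule integrable_bdd_supp[where K=K and a=0 and b="nhorizon N"])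
  have [measurable]: "f e \<in> borel_measurable borel" by (rule flow_meas[OF f e])
  show "(\<lambda>\<zeta>. h \<zeta> * f e (\<zeta> - ntransit N e)) \<in> borel_measurable borel" using h by measurable
  show "\<bar>h x * f e (x - ntransit N e)\<bar> \<le> K" for x
  proof -
    have "\<bar>h x * f e (x - ntransit N e)\<bar> = \<bar>h x\<bar> * \<bar>f e (x - ntransit N e)\<bar>" by (simp add: abs_mult)
    also have "\<dots> \<le> 1 * K" using h(2)[of x] flow_bnd(1)[OF G f e, of "x - ntransit N e"]
      by (intro mult_mono) auto
    finally show ?thesis by simp
  qed
  show "x \<notin> {0..nhorizon N} \<Longrightarrow> h x * f e (x - ntransit N e) = 0" for x
    using flow_bnd(4)[OF G f e, of "x - ntransit N e"] good_facts(5)[OF G e] by auto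
qed

lemma value_identity:
  assumes G: "good_net N K" and f: "is_dyn_flow N f" and S: "is_dyn_cut N S"
  shows "flow_value N f = (\<Sum>e\<in>nedges N. LINT \<theta>|lborel.
            f e \<theta> * (sind S (fst e) \<theta> - sind S (snd e) (\<theta> + ntransit N e)))"
proof -
  let ?V = "nverts N" and ?E = "nedges N" and ?s = "nsrc N" and ?t = "nsnk N"
    and ?T = "nhorizon N" and ?\<tau> = "ntransit N"
  note gf = good_facts[OF G]
  have Sm: "v \<in> ?V \<Longrightarrow> {\<theta>. S v \<theta>} \<in> sets lborel" for v using S by (auto simp: is_dyn_cut_def)
  have Ss: "\<theta> \<in> {0..?T} \<Longrightarrow> sind S ?s \<theta> = 1" for \<theta> using S by (auto simp: is_dyn_cut_def sind_def)
  have St: "\<theta> \<in> {0..?T} \<Longrightarrow> sind S ?t \<theta> = 0" for \<theta> using S by (auto simp: is_dyn_cut_def sind_def)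
  define h where "h v \<zeta> = indicator {0..?T} \<zeta> * (1 - sind S v \<zeta>)" for v \<zeta>
  have hm: "v \<in> ?V \<Longrightarrow> h v \<in> borel_measurable borel" for v
  proof -
    assume v: "v \<in> ?V"
    have [measurable]: "sind S v \<in> borel_measurable borel" by (rule sind_meas[of S v, OF Sm[OF v]])
    show ?thesis unfolding h_def by measurable
  qed
  have hb: "\<bar>h v x\<bar> \<le> 1" for v x by (auto simp: h_def sind_def indicator_def)
  define A where "A e = (LINT \<zeta>|lborel. h (snd e) \<zeta> * f e (\<zeta> - ?\<tau> e))" for e
  define B where "B e = (LINT \<zeta>|lborel. h (fst e) \<zeta> * f e \<zeta>)" for e
  define \<Phi> where "\<Phi> v = (LINT \<zeta>|lborel. h v \<zeta> * rate N f v \<zeta>)" for v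
  have iA: "e \<in> ?E \<Longrightarrow> integrable lborel (\<lambda>\<zeta>. h (snd e) \<zeta> * f e (\<zeta> - ?\<tau> e))" for e
    by (rule int_shift[OF G f _ hm hb]) (auto intro: gf)
  have iB: "e \<in> ?E \<Longrightarrow> integrable lborel (\<lambda>\<zeta>. h (fst e) \<zeta> * f e \<zeta>)" for e
    by (rule int_plain[OF G f _ hm hb]) (auto intro: gf)
  have irate: "integrable lborel (rate N f v)" for v
  proof -
    have "integrable lborel (\<lambda>\<zeta>. (\<Sum>e\<in>{e\<in>?E. snd e = v}. 1 * f e (\<zeta> - ?\<tau> e))
      - (\<Sum>e\<in>{e\<in>?E. fst e = v}. 1 * f e \<zeta>))"
      by (intro Bochner_Integration.integrable_diff Bochner_Integration.integrable_sum
            int_shift[OF G f] int_plain[OF G f]) auto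
    then show ?thesis by (simp add: rate_def[abs_def])
  qed
  have rate_meas: "rate N f v \<in> borel_measurable borel" for v using irate[of v] by simp
  have Phi_eq: "\<Phi> v = (\<Sum>e\<in>{e\<in>?E. snd e = v}. A e) - (\<Sum>e\<in>{e\<in>?E. fst e = v}. B e)" if v: "v \<in> ?V" for v
  proof -
    have "(\<lambda>\<zeta>. h v \<zeta> * rate N f v \<zeta>) = (\<lambda>\<zeta>. (\<Sum>e\<in>{e\<in>?E. snd e = v}. h (snd e) \<zeta> * f e (\<zeta> - ?\<tau> e))
      - (\<Sum>e\<in>{e\<in>?E. fst e = v}. h (fst e) \<zeta> * f e \<zeta>))"
      by (auto simp: rate_def sum_distrib_left right_diff_distrib fun_eq_iff intro!: sum.cong arg_cong2[where f="(-)"])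
    then have "\<Phi> v = (LINT \<zeta>|lborel. (\<Sum>e\<in>{e\<in>?E. snd e = v}. h (snd e) \<zeta> * f e (\<zeta> - ?\<tau> e))
      - (\<Sum>e\<in>{e\<in>?E. fst e = v}. h (fst e) \<zeta> * f e \<zeta>))" by (simp add: \<Phi>_def)
    also have "\<dots> = (LINT \<zeta>|lborel. (\<Sum>e\<in>{e\<in>?E. snd e = v}. h (snd e) \<zeta> * f e (\<zeta> - ?\<tau> e)))
      - (LINT \<zeta>|lborel. (\<Sum>e\<in>{e\<in>?E. fst e = v}. h (fst e) \<zeta> * f e \<zeta>))"
      by (intro Bochner_Integration.integral_diff Bochner_Integration.integrable_sum iA iB) auto
    also have "\<dots> = (\<Sum>e\<in>{e\<in>?E. snd e = v}. A e) - (\<Sum>e\<in>{e\<in>?E. fst e = v}. B e)"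
    proof -
      have "(LINT \<zeta>|lborel. (\<Sum>e\<in>{e\<in>?E. snd e = v}. h (snd e) \<zeta> * f e (\<zeta> - ?\<tau> e)))
        = (\<Sum>e\<in>{e\<in>?E. snd e = v}. A e)" unfolding A_def
        by (rule Bochner_Integration.integral_sum) (use iA in auto)
      moreover have "(LINT \<zeta>|lborel. (\<Sum>e\<in>{e\<in>?E. fst e = v}. h (fst e) \<zeta> * f e \<zeta>))
        = (\<Sum>e\<in>{e\<in>?E. fst e = v}. B e)" unfolding B_def
        by (rule Bochner_Integration.integral_sum) (use iB in auto)
      ultimately show ?thesis by simp
    qed
    finally show ?thesis .
  qed
  have val: "flow_value N f = \<Phi> ?t"
  proof -
    have "flow_value N f = (LINT \<zeta>|lborel. indicator {0..?T} \<zeta> * rate N f ?t \<zeta>)"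
      by (simp add: flow_value_def excess_def rate_def set_lebesgue_integral_def)
    also have "\<dots> = \<Phi> ?t" unfolding \<Phi>_def
      by (intro Bochner_Integration.integral_cong) (auto simp: h_def St indicator_def)
    finally show ?thesis .
  qed
  have Phi_s: "\<Phi> ?s = 0" unfolding \<Phi>_def
    by (subst Bochner_Integration.integral_cong[where g="\<lambda>_. 0"]) (auto simp: h_def Ss indicator_def)
  have Phi_int: "\<Phi> v = 0" if v: "v \<in> ?V - {?s, ?t}" for v
  proof -
    have ex: "\<forall>\<Theta>\<in>{0..?T}. excess N f v \<Theta> = 0" using f v by (auto simp: is_dyn_flow_def)
    have "AE x in lborel. x \<in> {0..?T} \<longrightarrow> rate N f v x = 0"
    proof (rule ae_zero_from_intervals)
      show "set_integrable lborel {0..?T} (rate N f v)"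
        unfolding set_integrable_def using irate[of v]
        by (intro integrable_mult_indicator) auto
      show "\<Theta> \<in> {0..?T} \<Longrightarrow> (LINT x:{0..\<Theta>}|lborel. rate N f v x) = 0" for \<Theta>
        using ex by (auto simp: excess_def rate_def[abs_def])
    qed
    then have "AE x in lborel. h v x * rate N f v x = 0"
      by (rule AE_mp) (auto simp: h_def indicator_def)
    then show ?thesis unfolding \<Phi>_def by (rule integral_eq_zero_AE)
  qed
  have "flow_value N f = (\<Sum>v\<in>?V. \<Phi> v)"
  proof -
    have "(\<Sum>v\<in>?V. \<Phi> v) = \<Phi> ?t + (\<Sum>v\<in>?V - {?t}. \<Phi> v)"
      using gf by (subst sum.remove) auto
    also have "(\<Sum>v\<in>?V - {?t}. \<Phi> v) = 0"
      using Phi_s Phi_int by (intro sum.neutral) auto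
    finally show ?thesis using val by simp
  qed
  also have "\<dots> = (\<Sum>v\<in>?V. \<Sum>e\<in>{e\<in>?E. snd e = v}. A e) - (\<Sum>v\<in>?V. \<Sum>e\<in>{e\<in>?E. fst e = v}. B e)"
    using Phi_eq by (simp add: sum_subtractf)
  also have "\<dots> = (\<Sum>e\<in>?E. A e) - (\<Sum>e\<in>?E. B e)"
    using gf by (subst (1 2) sum.group) auto
  also have "\<dots> = (\<Sum>e\<in>?E. A e - B e)" by (simp add: sum_subtractf)
  also have "\<dots> = (\<Sum>e\<in>?E. LINT \<theta>|lborel.
            f e \<theta> * (sind S (fst e) \<theta> - sind S (snd e) (\<theta> + ntransit N e)))"
  proof (rule sum.cong[OF refl])
    fix e assume e: "e \<in> ?E"
    have [measurable]: "f e \<in> borel_measurable borel" by (rule flow_meas[OF f e])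
    have tau: "0 \<le> ?\<tau> e" using gf e by auto
    have A1: "A e = (LINT \<zeta>|lborel. (1 - sind S (snd e) \<zeta>) * f e (\<zeta> - ?\<tau> e))"
      unfolding A_def h_def
    proof (intro Bochner_Integration.integral_cong refl)
      fix \<zeta> show "indicator {0..?T} \<zeta> * (1 - sind S (snd e) \<zeta>) * f e (\<zeta> - ?\<tau> e) = (1 - sind S (snd e) \<zeta>) * f e (\<zeta> - ?\<tau> e)"
        using flow_bnd(4)[OF G f e, of "\<zeta> - ?\<tau> e"] tau by (cases "\<zeta> \<in> {0..?T}") auto
    qed
    also have "\<dots> = (LINT \<theta>|lborel. (1 - sind S (snd e) (\<theta> + ?\<tau> e)) * f e \<theta>)"
      using lborel_integral_real_affine[of 1 "\<lambda>\<zeta>. (1 - sind S (snd e) \<zeta>) * f e (\<zeta> - ?\<tau> e)" "?\<tau> e"]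
      by (simp add: add.commute)
    finally have A2: "A e = \<dots>" .
    have B1: "B e = (LINT \<theta>|lborel. (1 - sind S (fst e) \<theta>) * f e \<theta>)"
      unfolding B_def h_def
    proof (intro Bochner_Integration.integral_cong refl)
      fix \<zeta> show "indicator {0..?T} \<zeta> * (1 - sind S (fst e) \<zeta>) * f e \<zeta> = (1 - sind S (fst e) \<zeta>) * f e \<zeta>"
        using flow_bnd(3)[OF G f e, of "\<zeta>"] by (cases "\<zeta> \<in> {0..?T}") auto
    qed
    have m1: "(\<lambda>\<theta>. 1 - sind S (snd e) (\<theta> + ?\<tau> e)) \<in> borel_measurable borel"
      using sind_meas_shift[of S "snd e", OF Sm[OF gf(4)[OF e]]] by measurable
    have m2: "(\<lambda>\<theta>. 1 - sind S (fst e) \<theta>) \<in> borel_measurable borel"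
      using sind_meas[of S "fst e", OF Sm[OF gf(3)[OF e]]] by measurable
    have i1: "integrable lborel (\<lambda>\<theta>. (1 - sind S (snd e) (\<theta> + ?\<tau> e)) * f e \<theta>)"
      by (rule int_plain[OF G f e m1]) (auto simp: sind_def)
    have i2: "integrable lborel (\<lambda>\<theta>. (1 - sind S (fst e) \<theta>) * f e \<theta>)"
      by (rule int_plain[OF G f e m2]) (auto simp: sind_def)
    have "A e - B e = (LINT \<theta>|lborel. (1 - sind S (snd e) (\<theta> + ?\<tau> e)) * f e \<theta> - (1 - sind S (fst e) \<theta>) * f e \<theta>)"
      unfolding A2 B1 by (rule Bochner_Integration.integral_diff[OF i1 i2, symmetric])
    also have "\<dots> = (LINT \<theta>|lborel. f e \<theta> * (sind S (fst e) \<theta> - sind S (snd e) (\<theta> + ntransit N e)))"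
      by (intro Bochner_Integration.integral_cong refl) (simp add: algebra_simps)
    finally show "A e - B e = \<dots>" .
  qed
  finally show ?thesis .
qed

lemma defect_props:
  assumes G: "good_net N K" and f: "is_dyn_flow N f" and S: "is_dyn_cut N S" and e: "e \<in> nedges N"
  shows "0 \<le> defect N f S e \<theta>" "integrable lborel (defect N f S e)"
    "integrable lborel (\<lambda>\<theta>. indicator {0..nhorizon N} \<theta> *
      (if S (fst e) \<theta> \<and> \<not> S (snd e) (\<theta> + ntransit N e) then ncap N e \<theta> else 0))"
proof -
  note gf = good_facts[OF G]
  let ?T = "nhorizon N" and ?\<tau> = "ntransit N"
  have Sm: "v \<in> nverts N \<Longrightarrow> {\<theta>. S v \<theta>} \<in> sets lborel" for v using S by (auto simp: is_dyn_cut_def)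
  have m1: "sind S (fst e) \<in> borel_measurable borel" 
    by (rule sind_meas[of S "fst e", OF Sm[OF gf(3)[OF e]]])
  have m2: "(\<lambda>\<theta>. sind S (snd e) (\<theta> + ?\<tau> e)) \<in> borel_measurable borel"
    by (rule sind_meas_shift[of S "snd e", OF Sm[OF gf(4)[OF e]]])
  have m3: "ncap N e \<in> borel_measurable borel" using gf(13)[OF e] .
  have ceq: "(\<lambda>\<theta>. indicator {0..?T} \<theta> *
      (if S (fst e) \<theta> \<and> \<not> S (snd e) (\<theta> + ?\<tau> e) then ncap N e \<theta> else 0)) =
     (\<lambda>\<theta>. indicator {0..?T} \<theta> * (ncap N e \<theta> * sind S (fst e) \<theta> * (1 - sind S (snd e) (\<theta> + ?\<tau> e))))"
    by (auto simp: fun_eq_iff sind_def)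
  show iC: "integrable lborel (\<lambda>\<theta>. indicator {0..?T} \<theta> *
      (if S (fst e) \<theta> \<and> \<not> S (snd e) (\<theta> + ?\<tau> e) then ncap N e \<theta> else 0))"
  proof (rule integrable_bdd_supp[where K=K and a=0 and b="nhorizon N"])
    show "(\<lambda>\<theta>. indicator {0..?T} \<theta> *
      (if S (fst e) \<theta> \<and> \<not> S (snd e) (\<theta> + ?\<tau> e) then ncap N e \<theta> else 0)) \<in> borel_measurable borel"
      unfolding ceq
      by (intro borel_measurable_times borel_measurable_diff borel_measurable_const borel_measurable_indicator m1 m2 m3) auto
    show "\<bar>indicator {0..?T} x * (if S (fst e) x \<and> \<not> S (snd e) (x + ?\<tau> e) then ncap N e x else 0)\<bar> \<le> K" for x
    proof (cases "x \<in> {0..?T}")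
      case True
      then show ?thesis using gf(11)[OF e True] gf(12)[OF e True] gf(10) by simp
    next
      case False
      then show ?thesis using gf(10) by simp
    qed
    show "x \<notin> {0..?T} \<Longrightarrow> indicator {0..?T} x * (if S (fst e) x \<and> \<not> S (snd e) (x + ?\<tau> e) then ncap N e x else 0) = 0" for x
      by simp
  qed
  have iF: "integrable lborel (\<lambda>\<theta>. (sind S (fst e) \<theta> - sind S (snd e) (\<theta> + ?\<tau> e)) * f e \<theta>)"
    by (rule int_plain[OF G f e], intro borel_measurable_diff m1 m2) (auto simp: sind_def)
  have "integrable lborel (\<lambda>\<theta>. indicator {0..?T} \<theta> *
      (if S (fst e) \<theta> \<and> \<not> S (snd e) (\<theta> + ?\<tau> e) then ncap N e \<theta> else 0) - 
      (sind S (fst e) \<theta> - sind S (snd e) (\<theta> + ?\<tau> e)) * f e \<theta>)"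
    by (rule Bochner_Integration.integrable_diff[OF iC iF])
  moreover have "(\<lambda>\<theta>. indicator {0..?T} \<theta> *
      (if S (fst e) \<theta> \<and> \<not> S (snd e) (\<theta> + ?\<tau> e) then ncap N e \<theta> else 0) - 
      (sind S (fst e) \<theta> - sind S (snd e) (\<theta> + ?\<tau> e)) * f e \<theta>) = defect N f S e"
  proof (rule ext)
    fix \<theta>
    show "indicator {0..?T} \<theta> *
      (if S (fst e) \<theta> \<and> \<not> S (snd e) (\<theta> + ?\<tau> e) then ncap N e \<theta> else 0) - 
      (sind S (fst e) \<theta> - sind S (snd e) (\<theta> + ?\<tau> e)) * f e \<theta> = defect N f S e \<theta>"
      unfolding defect_def by (simp only: mult.commute[of "f e \<theta>"])
  qed
  ultimately show "integrable lborel (defect N f S e)" by simp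
  show "0 \<le> defect N f S e \<theta>"
  proof (cases "\<theta> \<in> {0..?T}")
    case False
    have z: "f e \<theta> = 0" using flow_bnd(3)[OF G f e] False by blast
    have i0: "indicator {0..?T} \<theta> = (0::real)" using False by simp
    show ?thesis unfolding defect_def z i0 by simp
  next
    case True
    have f0: "0 \<le> f e \<theta>" by (rule flow_bnd(2)[OF G f e])
    have fc: "f e \<theta> \<le> (if \<theta> \<in> {0..?T - ?\<tau> e} then ncap N e \<theta> else 0)" by (rule flow_bnd(5)[OF G f e])
    have c0: "0 \<le> ncap N e \<theta>" using gf(11)[OF e True] .
    have fc': "f e \<theta> \<le> ncap N e \<theta>"
    proof (cases "\<theta> \<in> {0..?T - ?\<tau> e}")
      case True then show ?thesis using fc by simp
    next
      case False
      then have "f e \<theta> \<le> 0" using fc by (simp only: if_False)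
      then show ?thesis using c0 by linarith
    qed
    have ind: "indicator {0..?T} \<theta> = (1::real)" using True by simp
    show ?thesis
    proof (cases "S (fst e) \<theta>")
      case s1: True
      show ?thesis
      proof (cases "S (snd e) (\<theta> + ?\<tau> e)")
        case True then show ?thesis using s1 by (simp add: defect_def sind_def ind)
      next
        case False then show ?thesis using s1 fc' by (simp add: defect_def sind_def ind)
      qed
    next
      case s1: False
      show ?thesis
      proof (cases "S (snd e) (\<theta> + ?\<tau> e)")
        case True then show ?thesis using s1 f0 by (simp add: defect_def sind_def ind)
      next
        case False then show ?thesis using s1 by (simp add: defect_def sind_def ind)
      qed
    qed
  qed
qed

lemma duality:
  assumes G: "good_net N K" and f: "is_dyn_flow N f" and S: "is_dyn_cut N S"
  shows "cut_capacity N S - flow_value N f = (\<Sum>e\<in>nedges N. LINT \<theta>|lborel. defect N f S e \<theta>)"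
proof -
  note gf = good_facts[OF G]
  let ?T = "nhorizon N" and ?\<tau> = "ntransit N"
  define C where "C e \<theta> = indicator {0..?T} \<theta> *
      (if S (fst e) \<theta> \<and> \<not> S (snd e) (\<theta> + ?\<tau> e) then ncap N e \<theta> else 0)" for e \<theta>
  define F where "F e \<theta> = f e \<theta> * (sind S (fst e) \<theta> - sind S (snd e) (\<theta> + ?\<tau> e))" for e \<theta>
  have iC: "e \<in> nedges N \<Longrightarrow> integrable lborel (C e)" for e
    unfolding C_def[abs_def] by (rule defect_props(3)[OF G f S])
  have iF: "e \<in> nedges N \<Longrightarrow> integrable lborel (F e)" for e
  proof -
    assume e: "e \<in> nedges N"
    have "integrable lborel (\<lambda>\<theta>. C e \<theta> - defect N f S e \<theta>)"
      by (rule Bochner_Integration.integrable_diff[OF iC[OF e] defect_props(2)[OF G f S e]])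
    moreover have "(\<lambda>\<theta>. C e \<theta> - defect N f S e \<theta>) = F e"
    proof (rule ext)
      fix \<theta> show "C e \<theta> - defect N f S e \<theta> = F e \<theta>"
        unfolding C_def F_def defect_def by (simp only: diff_diff_eq2 add_diff_cancel_left')
    qed
    ultimately show ?thesis by simp
  qed
  have cap: "cut_capacity N S = (\<Sum>e\<in>nedges N. LINT \<theta>|lborel. C e \<theta>)"
  proof -
    have "cut_capacity N S = (LINT \<theta>|lborel. (\<Sum>e\<in>nedges N. C e \<theta>))"
      unfolding cut_capacity_def set_lebesgue_integral_def C_def by (simp only: real_scaleR_def sum_distrib_left)
    also have "\<dots> = (\<Sum>e\<in>nedges N. LINT \<theta>|lborel. C e \<theta>)"
      by (rule Bochner_Integration.integral_sum) (use iC in auto)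
    finally show ?thesis .
  qed
  have val: "flow_value N f = (\<Sum>e\<in>nedges N. LINT \<theta>|lborel. F e \<theta>)"
    unfolding F_def by (rule value_identity[OF G f S])
  have "cut_capacity N S - flow_value N f = (\<Sum>e\<in>nedges N. (LINT \<theta>|lborel. C e \<theta>) - (LINT \<theta>|lborel. F e \<theta>))"
    unfolding cap val by (simp add: sum_subtractf)
  also have "\<dots> = (\<Sum>e\<in>nedges N. LINT \<theta>|lborel. defect N f S e \<theta>)"
  proof (rule sum.cong[OF refl])
    fix e assume e: "e \<in> nedges N"
    have "(LINT \<theta>|lborel. C e \<theta>) - (LINT \<theta>|lborel. F e \<theta>) = (LINT \<theta>|lborel. C e \<theta> - F e \<theta>)"
      by (rule Bochner_Integration.integral_diff[OF iC[OF e] iF[OF e], symmetric])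
    also have "\<dots> = (LINT \<theta>|lborel. defect N f S e \<theta>)"
      by (simp only: C_def F_def defect_def)
    finally show "(LINT \<theta>|lborel. C e \<theta>) - (LINT \<theta>|lborel. F e \<theta>) = \<dots>" .
  qed
  finally show ?thesis .
qed

lemma weak_duality:
  assumes G: "good_net N K" and f: "is_dyn_flow N f" and S: "is_dyn_cut N S"
  shows "flow_value N f \<le> cut_capacity N S"
proof -
  have "0 \<le> (\<Sum>e\<in>nedges N. LINT \<theta>|lborel. defect N f S e \<theta>)"
    by (intro sum_nonneg Bochner_Integration.integral_nonneg defect_props(1)[OF G f S])
  then show ?thesis using duality[OF G f S] by simp
qed

lemma compl_slack:
  assumes G: "good_net N K" and f: "is_dyn_flow N f" and S: "is_dyn_cut N S"
    and eq: "flow_value N f = cut_capacity N S" and e: "e \<in> nedges N"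
  shows "AE \<theta> in lborel. defect N f S e \<theta> = 0"
proof -
  have "(\<Sum>e\<in>nedges N. LINT \<theta>|lborel. defect N f S e \<theta>) = 0" using duality[OF G f S] eq by simp
  moreover have "finite (nedges N)" using good_facts[OF G] by simp
  moreover have "\<forall>e\<in>nedges N. 0 \<le> (LINT \<theta>|lborel. defect N f S e \<theta>)"
    by (intro ballI Bochner_Integration.integral_nonneg defect_props(1)[OF G f S])
  ultimately have "\<forall>e\<in>nedges N. (LINT \<theta>|lborel. defect N f S e \<theta>) = 0"
    using sum_nonneg_eq_0_iff[of "nedges N" "\<lambda>e. LINT \<theta>|lborel. defect N f S e \<theta>"] by simp
  then have z: "(LINT \<theta>|lborel. defect N f S e \<theta>) = 0" using e by (rule bspec)
  have nn: "AE \<theta> in lborel. 0 \<le> defect N f S e \<theta>" by (rule AE_I2) (rule defect_props(1)[OF G f S e])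
  show ?thesis
    using integral_nonneg_eq_0_iff_AE[OF defect_props(2)[OF G f S e] nn] z by simp
qed

lemma cs_fwd_imp:
  assumes "defect N f S e \<theta> = 0" "\<theta> \<in> {0..nhorizon N}" "f e \<theta> < ncap N e \<theta>" "S (fst e) \<theta>"
  shows "S (snd e) (\<theta> + ntransit N e)"
proof (rule ccontr)
  assume n: "\<not> S (snd e) (\<theta> + ntransit N e)"
  have "defect N f S e \<theta> = ncap N e \<theta> - f e \<theta>"
    using assms(2,4) n by (simp add: defect_def sind_def)
  then show False using assms(1,3) by simp
qed

lemma cs_fwd_sat:
  assumes "defect N f S e \<theta> = 0" "\<theta> \<in> {0..nhorizon N}" "S (fst e) \<theta>" "\<not> S (snd e) (\<theta> + ntransit N e)"
  shows "f e \<theta> = ncap N e \<theta>"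
proof -
  have "defect N f S e \<theta> = ncap N e \<theta> - f e \<theta>"
    using assms(2,3,4) by (simp add: defect_def sind_def)
  then show ?thesis using assms(1) by simp
qed

lemma AE_translate:
  fixes c :: real
  assumes "AE x in lborel. P x"
  shows "AE x in lborel. P (x + c)"
proof -
  from assms obtain A where A: "A \<in> null_sets lborel" "{x. \<not> P x} \<subseteq> A"
    by (auto simp: eventually_ae_filter)
  have m: "((+) c) \<in> measurable borel borel" by simp
  have "emeasure lborel (((+) c) -` A) = emeasure (distr lborel borel ((+) c)) A"
    using A(1) by (subst emeasure_distr) (auto simp: null_sets_def)
  also have "\<dots> = 0" using A(1) by (simp add: lborel_distr_plus null_setsD1)
  finally have "((+) c) -` A \<in> null_sets lborel"
    using A(1) measurable_sets[OF m, of A] by (auto simp: null_sets_def)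
  moreover have "{x. \<not> P (x + c)} \<subseteq> ((+) c) -` A" using A(2) by (auto simp: add.commute)
  ultimately show ?thesis by (auto simp: eventually_ae_filter)
qed

lemma AE_ex_interval:
  fixes p q :: real
  assumes "AE x in lborel. x \<in> {p<..<q} \<longrightarrow> Q x" "p < q"
  shows "\<exists>x\<in>{p<..<q}. Q x"
proof (rule ccontr)
  assume "\<not> ?thesis"
  then have "AE x in lborel. x \<notin> {p<..<q}" using assms(1) by (auto elim: AE_mp)
  then have "{p<..<q} \<in> null_sets lborel" by (subst AE_iff_null_sets) auto
  then have "emeasure lborel {p<..<q} = 0" by auto
  then show False using assms(2) by simp
qed

lemma ecard_ge:
  assumes "inj_on g A" "g ` A \<subseteq> Z" "finite A"
  shows "enat (card A) \<le> ecard Z"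
proof (cases "finite Z")
  case True
  have "card A = card (g ` A)" using assms(1) by (simp add: card_image)
  also have "\<dots> \<le> card Z" using True assms(2) by (rule card_mono)
  finally show ?thesis using True by (simp add: ecard_def)
next
  case False then show ?thesis by (simp add: ecard_def)
qed

lemma acyclic_rank:
  fixes r :: "'a \<Rightarrow> nat"
  assumes "\<forall>(a,b)\<in>R. r a < r b"
  shows "acyclic R"
proof -
  have "(a, b) \<in> R\<^sup>+ \<Longrightarrow> r a < r b" for a b
    by (induction rule: trancl.induct) (use assms in auto)
  then show ?thesis unfolding acyclic_def by auto
qed

definition P :: "nat \<Rightarrow> real set" where
  "P i = (\<Union>k<2^i. {2 * real k ..< 2 * real k + 1})"

lemma P_meas[measurable]: "P i \<in> sets borel"
  unfolding P_def by auto

lemma P_bounds: "\<theta> \<in> P i \<Longrightarrow> 0 \<le> \<theta> \<and> \<theta> < 2 ^ Suc i"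
proof -
  assume "\<theta> \<in> P i"
  then obtain k where k: "k < 2^i" "2 * real k \<le> \<theta>" "\<theta> < 2 * real k + 1" by (auto simp: P_def)
  have "real k + 1 \<le> 2 ^ i" using k(1)
    by (metis Suc_leI of_nat_Suc of_nat_le_iff of_nat_numeral of_nat_power add.commute)
  then show ?thesis using k by auto
qed

lemma P_Suc: "\<theta> \<in> P (Suc i) \<longleftrightarrow> \<theta> \<in> P i \<or> \<theta> - 2 ^ Suc i \<in> P i"
proof
  assume "\<theta> \<in> P (Suc i)"
  then obtain k where k: "k < 2^Suc i" "2 * real k \<le> \<theta>" "\<theta> < 2 * real k + 1" by (auto simp: P_def)
  show "\<theta> \<in> P i \<or> \<theta> - 2 ^ Suc i \<in> P i"
  proof (cases "k < 2^i")
    case True then show ?thesis using k by (auto simp: P_def)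
  next
    case False
    define k' where "k' = k - 2^i"
    have kk: "k = k' + 2^i" "k' < 2^i" using False k(1) by (auto simp: k'_def)
    have "real k = real k' + 2^i" using kk(1) by simp
    then have "2 * real k' \<le> \<theta> - 2 ^ Suc i" "\<theta> - 2 ^ Suc i < 2 * real k' + 1" using k by auto
    then show ?thesis using kk(2) by (auto simp: P_def)
  qed
next
  assume "\<theta> \<in> P i \<or> \<theta> - 2 ^ Suc i \<in> P i"
  then show "\<theta> \<in> P (Suc i)"
  proof
    assume "\<theta> \<in> P i"
    then obtain k where k: "k < 2^i" "2 * real k \<le> \<theta>" "\<theta> < 2 * real k + 1" by (auto simp: P_def)
    have "k < 2 ^ Suc i" using k(1) by simp
    then show ?thesis using k by (auto simp: P_def)
  next
    assume "\<theta> - 2 ^ Suc i \<in> P i"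
    then obtain k where k: "k < 2^i" "2 * real k \<le> \<theta> - 2 ^ Suc i" "\<theta> - 2 ^ Suc i < 2 * real k + 1" by (auto simp: P_def)
    have "k + 2^i < 2 ^ Suc i" using k(1) by simp
    moreover have "real (k + 2^i) = real k + 2^i" by simp
    ultimately show ?thesis using k unfolding P_def
      by (intro UN_I[of "k + 2^i"]) auto
  qed
qed

lemma P_disj: "\<theta> \<in> P i \<Longrightarrow> \<theta> - 2 ^ Suc i \<notin> P i"
  using P_bounds[of \<theta> i] P_bounds[of "\<theta> - 2 ^ Suc i" i] by auto

lemma P_mono: "P i \<subseteq> P (Suc i)" using P_Suc by auto

lemma P_0: "\<theta> \<in> P 0 \<longleftrightarrow> 0 \<le> \<theta> \<and> \<theta> < 1"
  by (auto simp: P_def)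

lemma P_left:
  assumes "k < 2^l" "x \<in> {2 * real k + 1 - 1 <..< 2 * real k + 1}"
  shows "x \<in> P l"
  using assms unfolding P_def by (intro UN_I[of k]) auto

lemma P_right:
  assumes "x \<in> {2 * real k + 1 <..< 2 * real k + 2}"
  shows "x \<notin> P l"
proof
  assume "x \<in> P l"
  then obtain k' where k': "2 * real k' \<le> x" "x < 2 * real k' + 1" by (auto simp: P_def)
  have "real k' < real (k + 1)" "real k < real k'" using k' assms by auto
  then have "k' < k + 1" "k < k'" by (simp_all only: of_nat_less_iff)
  then show False by linarith
qed


lemma k_bound: "k < (2::nat)^l \<Longrightarrow> 2 * real k + 2 \<le> 2 ^ Suc l"
proof -
  assume "k < 2^l"
  then have "k + 1 \<le> 2^l" by simp
  then have "real (k + 1) \<le> real (2^l)" by (simp only: of_nat_le_iff)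
  then show ?thesis by simp
qed

lemma many_changes:
  fixes h :: "real \<Rightarrow> 'a"
  assumes ae: "AE \<theta> in lborel. \<theta> \<in> {0..2^Suc l} \<longrightarrow> h \<theta> = (if \<theta> \<in> P l then a else b)"
    and ab: "a \<noteq> b" and D: "{0..2^Suc l} \<subseteq> D" and k: "k < 2^l"
  shows "ess_change D h (2 * real k + 1)"
  unfolding ess_change_def
proof (intro allI impI notI)
  fix \<epsilon> :: real assume e: "0 < \<epsilon>"
  assume "\<exists>c. AE x in lborel. x \<in> D \<and> dist x (2 * real k + 1) < \<epsilon> \<longrightarrow> h x = c"
  then obtain c where c: "AE x in lborel. x \<in> D \<and> dist x (2 * real k + 1) < \<epsilon> \<longrightarrow> h x = c" by blast
  define \<delta> where "\<delta> = min \<epsilon> 1"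
  have d: "0 < \<delta>" "\<delta> \<le> \<epsilon>" "\<delta> \<le> 1" using e by (auto simp: \<delta>_def)
  have kb: "2 * real k + 2 \<le> 2 ^ Suc l" using k_bound[OF k] .
  have "AE x in lborel. x \<in> {2 * real k + 1 - \<delta> <..< 2 * real k + 1} \<longrightarrow> h x = c \<and> h x = a"
    using c ae
  proof (eventually_elim)
    case (elim x)
    show ?case
    proof
      assume x: "x \<in> {2 * real k + 1 - \<delta> <..< 2 * real k + 1}"
      have xT: "x \<in> {0..2^Suc l}" using x d kb by auto
      have "x \<in> D" using xT D by auto
      moreover have "dist x (2 * real k + 1) < \<epsilon>" using x d by (auto simp: dist_real_def)
      moreover have "x \<in> P l" by (rule P_left[OF k]) (use x d in auto)
      ultimately show "h x = c \<and> h x = a" using elim xT by auto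
    qed
  qed
  then have "\<exists>x\<in>{2 * real k + 1 - \<delta> <..< 2 * real k + 1}. h x = c \<and> h x = a"
    by (rule AE_ex_interval) (use d in simp)
  then have ca: "c = a" by force
  have "AE x in lborel. x \<in> {2 * real k + 1 <..< 2 * real k + 1 + \<delta>} \<longrightarrow> h x = c \<and> h x = b"
    using c ae
  proof (eventually_elim)
    case (elim x)
    show ?case
    proof
      assume x: "x \<in> {2 * real k + 1 <..< 2 * real k + 1 + \<delta>}"
      have xT: "x \<in> {0..2^Suc l}" using x d kb by auto
      have "x \<in> D" using xT D by auto
      moreover have "dist x (2 * real k + 1) < \<epsilon>" using x d by (auto simp: dist_real_def)
      moreover have "x \<notin> P l" by (rule P_right[of x k]) (use x d in auto)
      ultimately show "h x = c \<and> h x = b" using elim xT by auto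
    qed
  qed
  then have "\<exists>x\<in>{2 * real k + 1 <..< 2 * real k + 1 + \<delta>}. h x = c \<and> h x = b"
    by (rule AE_ex_interval) (use d in simp)
  then have "c = b" by force
  then show False using ca ab by simp
qed

definition Ed :: "nat \<Rightarrow> (nat \<times> nat) set" where
  "Ed l = {(0,2), (2*l+2, 1)} \<union> (\<lambda>i. (2*i+2, 2*i+4)) ` {..<l} \<union> (\<lambda>i. (2*i+2, 2*i+3)) ` {..<l}
     \<union> (\<lambda>i. (2*i+3, 2*i+4)) ` {..<l}"

definition tr :: "nat \<times> nat \<Rightarrow> real" where
  "tr e = (if even (fst e) \<and> snd e = fst e + 1 then 2 ^ (fst e div 2) else 0)"

definition cp :: "nat \<Rightarrow> nat \<times> nat \<Rightarrow> real \<Rightarrow> real" where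
  "cp l e \<theta> = (if e = (0,2) then (if \<theta> < 1 then 2^l + 1 else 0) else if e = (2*l+2, 1) then 1 else 2^l + 1)"

definition net :: "nat \<Rightarrow> dyn_network" where
  "net l = \<lparr>nverts = {0..2*l+2}, nedges = Ed l, nsrc = 0, nsnk = 1, nhorizon = 2^Suc l,
     ntransit = tr, ncap = cp l\<rparr>"

lemma net_simps[simp]: "nverts (net l) = {0..2*l+2}" "nedges (net l) = Ed l" "nsrc (net l) = 0"
  "nsnk (net l) = 1" "nhorizon (net l) = 2^Suc l" "ntransit (net l) = tr" "ncap (net l) = cp l"
  by (simp_all add: net_def)

lemma Ed_cases:
  assumes "e \<in> Ed l"
  obtains "e = (0,2)" | "e = (2*l+2, 1)" | i where "i < l" "e = (2*i+2, 2*i+4)"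
    | i where "i < l" "e = (2*i+2, 2*i+3)" | i where "i < l" "e = (2*i+3, 2*i+4)"
  using assms unfolding Ed_def by blast

lemma Ed_sub: "Ed l \<subseteq> {0..2*l+2} \<times> {0..2*l+2}"
  unfolding Ed_def by auto

lemma tr_simps: "tr (0,2) = 0" "tr (2*l+2, 1) = 0" "tr (2*i+2, 2*i+4) = 0"
  "tr (2*i+2, 2*i+3) = 2 ^ Suc i" "tr (2*i+3, 2*i+4) = 0"
  by (simp_all add: tr_def)

lemma cp_simps: "cp l (0,2) \<theta> = (if \<theta> < 1 then 2^l + 1 else 0)" "cp l (2*l+2, 1) \<theta> = 1"
  "cp l (2*i+2, 2*i+4) \<theta> = 2^l+1" "cp l (2*i+2, 2*i+3) \<theta> = 2^l+1" "cp l (2*i+3, 2*i+4) \<theta> = 2^l+1"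
  by (simp_all add: cp_def)


definition fl :: "nat \<Rightarrow> nat \<times> nat \<Rightarrow> real \<Rightarrow> real" where
  "fl l e \<theta> = (if e = (0,2) then 2^l * indicator (P 0) \<theta>
     else if e = (2*l+2, 1) then indicator (P l) \<theta>
     else if e \<in> Ed l then (if odd (fst e)
        then 2^(l - fst e div 2) * indicator (P (fst e div 2 - 1)) (\<theta> - 2^(fst e div 2))
        else 2^(l - fst e div 2) * indicator (P (fst e div 2 - 1)) \<theta>)
     else 0)"

lemma Ed_mem: "i < l \<Longrightarrow> (2*i+2, 2*i+4) \<in> Ed l" "i < l \<Longrightarrow> (2*i+2, 2*i+3) \<in> Ed l"
  "i < l \<Longrightarrow> (2*i+3, 2*i+4) \<in> Ed l" "(0,2) \<in> Ed l" "(2*l+2, 1) \<in> Ed l"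
  unfolding Ed_def by auto

lemma fl_simps:
  "fl l (0,2) \<theta> = 2^l * indicator (P 0) \<theta>"
  "fl l (2*l+2, 1) \<theta> = indicator (P l) \<theta>"
  "i < l \<Longrightarrow> fl l (2*i+2, 2*i+4) \<theta> = 2^(l - Suc i) * indicator (P i) \<theta>"
  "i < l \<Longrightarrow> fl l (2*i+2, 2*i+3) \<theta> = 2^(l - Suc i) * indicator (P i) \<theta>"
  "i < l \<Longrightarrow> fl l (2*i+3, 2*i+4) \<theta> = 2^(l - Suc i) * indicator (P i) (\<theta> - 2 ^ Suc i)"
proof -
  show "fl l (0,2) \<theta> = 2^l * indicator (P 0) \<theta>" by (simp add: fl_def)
  show "fl l (2*l+2, 1) \<theta> = indicator (P l) \<theta>" by (simp add: fl_def)
  assume i: "i < l"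
  have d1: "(2*i+2) div 2 = Suc i" "(2*i+3) div 2 = Suc i" by presburger+
  show "fl l (2*i+2, 2*i+4) \<theta> = 2^(l - Suc i) * indicator (P i) \<theta>"
    using Ed_mem(1)[OF i] d1 by (simp add: fl_def)
  show "fl l (2*i+2, 2*i+3) \<theta> = 2^(l - Suc i) * indicator (P i) \<theta>"
    using Ed_mem(2)[OF i] d1 by (simp add: fl_def)
  show "fl l (2*i+3, 2*i+4) \<theta> = 2^(l - Suc i) * indicator (P i) (\<theta> - 2 ^ Suc i)"
    using Ed_mem(3)[OF i] d1 by (simp add: fl_def)
qed

lemma fl_out: "e \<notin> Ed l \<Longrightarrow> fl l e \<theta> = 0"
  using Ed_mem(4,5) by (auto simp: fl_def)

lemma fl_meas: "fl l e \<in> borel_measurable borel"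
  unfolding fl_def by measurable

lemma cp_meas: "cp l e \<in> borel_measurable borel"
  unfolding cp_def by measurable

definition cutS :: "nat \<Rightarrow> nat \<Rightarrow> real \<Rightarrow> bool" where
  "cutS l v \<theta> = (2^Suc l < \<theta> \<or> v = 0 \<or> (even v \<and> 2 \<le> v \<and> \<theta> \<in> P (v div 2 - 1))
      \<or> (odd v \<and> 3 \<le> v \<and> \<theta> - 2^(v div 2) \<in> P (v div 2 - 1)))"

lemma cutS_simps:
  "cutS l 0 \<theta> = True" "cutS l 1 \<theta> = (2^Suc l < \<theta>)"
  "cutS l (2*i+2) \<theta> = (2^Suc l < \<theta> \<or> \<theta> \<in> P i)"
  "cutS l (2*i+3) \<theta> = (2^Suc l < \<theta> \<or> \<theta> - 2^Suc i \<in> P i)"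
proof -
  have d1: "(2*i+2) div 2 = Suc i" "(2*i+3) div 2 = Suc i" by presburger+
  show "cutS l 0 \<theta> = True" "cutS l 1 \<theta> = (2^Suc l < \<theta>)" by (auto simp: cutS_def)
  show "cutS l (2*i+2) \<theta> = (2^Suc l < \<theta> \<or> \<theta> \<in> P i)" using d1 by (simp add: cutS_def)
  show "cutS l (2*i+3) \<theta> = (2^Suc l < \<theta> \<or> \<theta> - 2^Suc i \<in> P i)" using d1 by (simp add: cutS_def)
qed

lemma cutS_meas: "{\<theta>. cutS l v \<theta>} \<in> sets lborel"
proof -
  let ?c = "2^(v div 2) :: real" and ?i = "v div 2 - 1"
  have m: "(\<lambda>\<theta>::real. \<theta> - ?c) \<in> measurable borel borel" by simp
  have pre: "(\<lambda>\<theta>::real. \<theta> - ?c) -` P ?i \<in> sets borel"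
    using measurable_sets[OF m P_meas[of ?i]] by simp
  have eq: "{\<theta>. cutS l v \<theta>} = {2^Suc l<..} \<union> (if v = 0 then UNIV else {})
     \<union> (if even v \<and> 2 \<le> v then P ?i else {}) \<union> (if odd v \<and> 3 \<le> v then (\<lambda>\<theta>. \<theta> - ?c) -` P ?i else {})"
    by (auto simp: cutS_def)
  show ?thesis unfolding eq using pre by auto
qed

lemma pow_le: "i < l \<Longrightarrow> (2::real) ^ Suc (Suc i) \<le> 2 ^ Suc l"
  by (intro power_increasing) auto

lemma pow_le2: "i \<le> l \<Longrightarrow> (2::real) ^ Suc i \<le> 2 ^ Suc l"
  by (intro power_increasing) auto

lemma pow_le3: "(2::real) ^ (l - Suc i) \<le> 2 ^ l"
  by (intro power_increasing) auto

lemma pow_ge1: "(1::real) \<le> 2 ^ l" by simp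
lemma pow_pos: "(0::real) < 2 ^ l" by simp

lemma pw1: "(1::real) \<le> 2 * 2^l" using pow_ge1[of l] by linarith
lemma pw2: "(0::real) < 2^l + 1" using pow_pos[of l] by linarith
lemma pw3: "(2::real)^(l - Suc i) < 2^l + 1" using pow_le3[of l i] by linarith

lemma ind_P_Suc: "indicator (P (Suc i)) \<zeta> = indicator (P i) \<zeta> + (indicator (P i) (\<zeta> - 2 ^ Suc i) :: real)"
  using P_Suc[of \<zeta> i] P_disj[of \<zeta> i] by (auto simp: indicator_def)

lemma fl_supp:
  assumes e: "e \<in> Ed l" and \<theta>: "\<theta> \<notin> {0..2^Suc l - tr e}"
  shows "fl l e \<theta> = 0"
  using e
proof (cases rule: Ed_cases)
  case 1
  have "\<theta> \<notin> P 0"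
  proof
    assume "\<theta> \<in> P 0"
    then have "0 \<le> \<theta>" "\<theta> < 1" by (auto simp: P_0)
    moreover have "(1::real) \<le> 2^Suc l" using pw1[of l] by simp
    moreover have "tr e = 0" using 1 by (simp add: tr_simps)
    moreover have "(2::real)^Suc l = 2*2^l" by simp
    ultimately have "\<theta> \<le> 2^Suc l - tr e" using pw1[of l] by linarith
    then have "\<theta> \<in> {0..2^Suc l - tr e}" using \<open>0 \<le> \<theta>\<close> by simp
    then show False using \<theta> by simp
  qed
  then show ?thesis unfolding 1 fl_simps by (simp add: indicator_def)
next
  case 2
  have \<theta>': "\<theta> \<notin> {0..2^Suc l}" using \<theta> unfolding 2 tr_simps by simp
  show ?thesis unfolding 2 fl_simps using \<theta>' P_bounds[of \<theta> l] by (auto simp: indicator_def)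
next
  case (3 i)
  have \<theta>': "\<theta> \<notin> {0..2^Suc l}" using \<theta> unfolding 3 tr_simps by simp
  have "\<theta> \<notin> P i"
  proof
    assume "\<theta> \<in> P i"
    then have "0 \<le> \<theta> \<and> \<theta> < 2^Suc i" by (rule P_bounds)
    then have "0 \<le> \<theta>" "\<theta> < 2^Suc i" by auto
    moreover have "(2::real)^Suc i \<le> 2^Suc l" using pow_le2[OF less_imp_le[OF 3(1)]] .
    ultimately have "\<theta> \<le> 2^Suc l" by linarith
    then show False using \<theta>' \<open>0 \<le> \<theta>\<close> by simp
  qed
  then show ?thesis unfolding 3(2) fl_simps(3)[OF 3(1)] by (simp add: indicator_def)
next
  case (4 i)
  have \<theta>': "\<theta> \<notin> {0..2^Suc l - 2^Suc i}" using \<theta> unfolding 4 tr_simps by simp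
  have "\<theta> \<notin> P i"
  proof
    assume "\<theta> \<in> P i"
    then have "0 \<le> \<theta> \<and> \<theta> < 2^Suc i" by (rule P_bounds)
    then have "0 \<le> \<theta>" "\<theta> < 2^Suc i" by auto
    moreover have "(2::real)^Suc (Suc i) = 2 * 2^Suc i" by simp
    ultimately show False using \<theta>' pow_le[OF 4(1)] by auto
  qed
  then show ?thesis unfolding 4(2) fl_simps(4)[OF 4(1)] by (simp add: indicator_def)
next
  case (5 i)
  have \<theta>': "\<theta> \<notin> {0..2^Suc l}" using \<theta> unfolding 5 tr_simps by simp
  have "\<theta> - 2^Suc i \<notin> P i"
  proof
    assume "\<theta> - 2^Suc i \<in> P i"
    then have "0 \<le> \<theta> - 2^Suc i \<and> \<theta> - 2^Suc i < 2^Suc i" by (rule P_bounds)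
    then have "0 \<le> \<theta> - 2^Suc i" "\<theta> - 2^Suc i < 2^Suc i" by auto
    moreover have "(2::real)^Suc (Suc i) = 2 * 2^Suc i" by simp
    moreover have "(0::real) \<le> 2^Suc i" by simp
    ultimately show False using \<theta>' pow_le[OF 5(1)] by auto
  qed
  then show ?thesis unfolding 5(2) fl_simps(5)[OF 5(1)] by (simp add: indicator_def)
qed

lemma fl_nonneg: "0 \<le> fl l e \<theta>"
  by (auto simp: fl_def indicator_def)

lemma fl_lt_cap:
  assumes e: "e \<in> Ed l" and ne: "e \<noteq> (2*l+2, 1)" and c: "e = (0,2) \<Longrightarrow> \<theta> < 1"
  shows "fl l e \<theta> < cp l e \<theta>"
  using e
proof (cases rule: Ed_cases)
  case 1
  have "(0::real) < 2^l + 1" using pow_pos[of l] by linarith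
  moreover have "(2::real)^l < 2^l + 1" by simp
  ultimately show ?thesis using 1 c by (auto simp: fl_simps cp_simps indicator_def)
next
  case 2 then show ?thesis using ne by simp
next
  case (3 i) then show ?thesis unfolding 3(2) fl_simps(3)[OF 3(1)] cp_simps using pw2[of l] pw3[of l i]
    by (auto simp: indicator_def)
next
  case (4 i) then show ?thesis unfolding 4(2) fl_simps(4)[OF 4(1)] cp_simps using pw2[of l] pw3[of l i]
    by (auto simp: indicator_def)
next
  case (5 i) then show ?thesis unfolding 5(2) fl_simps(5)[OF 5(1)] cp_simps using pw2[of l] pw3[of l i]
    by (auto simp: indicator_def)
qed

lemma fl_le_cap:
  assumes e: "e \<in> Ed l"
  shows "fl l e \<theta> \<le> cp l e \<theta>"
proof (cases "e = (2*l+2, 1)")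
  case True then show ?thesis unfolding True fl_simps(2) cp_simps(2) by (simp add: indicator_def)
next
  case False
  show ?thesis
  proof (cases "e = (0,2) \<and> \<not> \<theta> < 1")
    case True then show ?thesis using P_0[of \<theta>] by (auto simp: fl_simps cp_simps)
  next
    case False
    then show ?thesis using fl_lt_cap[OF e \<open>e \<noteq> (2*l+2, 1)\<close>, of \<theta>] by auto
  qed
qed

lemma Ed_iff: "e \<in> Ed l \<longleftrightarrow> e = (0,2) \<or> e = (2*l+2,1) \<or> (\<exists>i<l. e = (2*i+2,2*i+4)) \<or>
   (\<exists>i<l. e = (2*i+2,2*i+3)) \<or> (\<exists>i<l. e = (2*i+3,2*i+4))"
  unfolding Ed_def by blast

lemma In_sets:
  assumes l: "1 \<le> l"
  shows "{e \<in> Ed l. snd e = 2} = {(0,2)}"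
    "i < l \<Longrightarrow> {e \<in> Ed l. snd e = 2*i+4} = {(2*i+2, 2*i+4), (2*i+3, 2*i+4)}"
    "i < l \<Longrightarrow> {e \<in> Ed l. snd e = 2*i+3} = {(2*i+2, 2*i+3)}"
    "{e \<in> Ed l. fst e = 2} = {(2,4), (2,3)}"
    "i < l \<Longrightarrow> Suc i < l \<Longrightarrow> {e \<in> Ed l. fst e = 2*i+4} = {(2*i+4, 2*i+6), (2*i+4, 2*i+5)}"
    "{e \<in> Ed l. fst e = 2*l+2} = {(2*l+2, 1)}"
    "i < l \<Longrightarrow> {e \<in> Ed l. fst e = 2*i+3} = {(2*i+3, 2*i+4)}"
proof -
  show "{e \<in> Ed l. snd e = 2} = {(0,2)}" unfolding Ed_iff by (auto; presburger)
  show "i < l \<Longrightarrow> {e \<in> Ed l. snd e = 2*i+4} = {(2*i+2, 2*i+4), (2*i+3, 2*i+4)}"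
    unfolding Ed_iff by (auto; presburger)
  show "i < l \<Longrightarrow> {e \<in> Ed l. snd e = 2*i+3} = {(2*i+2, 2*i+3)}"
    unfolding Ed_iff by (auto; presburger)
  show "{e \<in> Ed l. fst e = 2} = {(2,4), (2,3)}"
    using l unfolding Ed_iff by (auto; presburger)
  show "{e \<in> Ed l. fst e = 2*l+2} = {(2*l+2, 1)}"
    unfolding Ed_iff by (auto; presburger)
  show "i < l \<Longrightarrow> {e \<in> Ed l. fst e = 2*i+3} = {(2*i+3, 2*i+4)}"
    unfolding Ed_iff by (auto; presburger)
  assume i: "i < l" "Suc i < l"
  have a: "(2*i+4, 2*i+6) = (2*Suc i+2, 2*Suc i+4)" "(2*i+4, 2*i+5) = (2*Suc i+2, 2*Suc i+3)" by simp_all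
  show "{e \<in> Ed l. fst e = 2*i+4} = {(2*i+4, 2*i+6), (2*i+4, 2*i+5)}"
  proof
    show "{(2*i+4, 2*i+6), (2*i+4, 2*i+5)} \<subseteq> {e \<in> Ed l. fst e = 2*i+4}"
    proof -
      have m1: "(2*i+4, 2*i+6) \<in> Ed l"
      proof -
        have "(2 * Suc i + 2, 2 * Suc i + 4) \<in> Ed l" by (rule Ed_mem(1)[OF i(2)])
        moreover have "(2 * Suc i + 2, 2 * Suc i + 4) = (2*i+4, 2*i+6)" by simp
        ultimately show ?thesis by metis
      qed
      have m2: "(2*i+4, 2*i+5) \<in> Ed l"
      proof -
        have "(2 * Suc i + 2, 2 * Suc i + 3) \<in> Ed l" by (rule Ed_mem(2)[OF i(2)])
        moreover have "(2 * Suc i + 2, 2 * Suc i + 3) = (2*i+4, 2*i+5)" by simp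
        ultimately show ?thesis by metis
      qed
      show ?thesis using m1 m2 by auto
    qed
    show "{e \<in> Ed l. fst e = 2*i+4} \<subseteq> {(2*i+4, 2*i+6), (2*i+4, 2*i+5)}"
      using i unfolding Ed_iff by (auto; presburger)
  qed
qed


lemma pow_split: "1 \<le> l \<Longrightarrow> (2::real)^l = 2^(l-1) + 2^(l-1)"
proof -
  assume "1 \<le> l"
  then have "l = Suc (l - 1)" by simp
  then have "(2::real)^l = 2 * 2^(l-1)" by (metis power_Suc)
  then show ?thesis by simp
qed

lemma cons_x0:
  assumes l: "1 \<le> l"
  shows "rate (net l) (fl l) 2 \<zeta> = 0"
proof -
  have l0: "0 < l" using l by simp
  have e4: "(2::nat, 4::nat) = (2*0+2, 2*0+4)" and e3: "(2::nat, 3::nat) = (2*0+2, 2*0+3)" by simp_all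
  have f24: "fl l (2,4) \<zeta> = 2^(l-1) * indicator (P 0) \<zeta>"
  proof -
    have "fl l (2,4) \<zeta> = fl l (2*0+2, 2*0+4) \<zeta>" by (simp only: e4)
    also have "\<dots> = 2^(l - Suc 0) * indicator (P 0) \<zeta>" by (rule fl_simps(3)[OF l0])
    finally show ?thesis by simp
  qed
  have f23: "fl l (2,3) \<zeta> = 2^(l-1) * indicator (P 0) \<zeta>"
  proof -
    have "fl l (2,3) \<zeta> = fl l (2*0+2, 2*0+3) \<zeta>" by (simp only: e3)
    also have "\<dots> = 2^(l - Suc 0) * indicator (P 0) \<zeta>" by (rule fl_simps(4)[OF l0])
    finally show ?thesis by simp
  qed
  have "rate (net l) (fl l) 2 \<zeta> = fl l (0,2) (\<zeta> - tr (0,2)) - (fl l (2,4) \<zeta> + fl l (2,3) \<zeta>)"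
    unfolding rate_def net_simps In_sets(1)[OF l] In_sets(4)[OF l] by simp
  also have "\<dots> = 2^l * indicator (P 0) \<zeta> - (2^(l-1) * indicator (P 0) \<zeta> + 2^(l-1) * indicator (P 0) \<zeta>)"
    unfolding f24 f23 fl_simps(1) tr_simps(1) by simp
  also have "\<dots> = 0" using pow_split[OF l] by (simp add: algebra_simps)
  finally show ?thesis .
qed

lemma cons_y:
  assumes l: "1 \<le> l" and i: "i < l"
  shows "rate (net l) (fl l) (2*i+3) \<zeta> = 0"
proof -
  have "rate (net l) (fl l) (2*i+3) \<zeta> = fl l (2*i+2, 2*i+3) (\<zeta> - tr (2*i+2, 2*i+3)) - fl l (2*i+3, 2*i+4) \<zeta>"
    unfolding rate_def net_simps In_sets(3)[OF l i] In_sets(7)[OF l i] by simp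
  also have "\<dots> = 0" unfolding fl_simps(4)[OF i] fl_simps(5)[OF i] tr_simps by simp
  finally show ?thesis .
qed

lemma cons_x:
  assumes l: "1 \<le> l" and i: "i < l"
  shows "rate (net l) (fl l) (2*i+4) \<zeta> = 0"
proof -
  have ne: "(2*i+2, 2*i+4) \<noteq> (2*i+3, 2*i+4)" by simp
  have "(\<Sum>e\<in>{e \<in> Ed l. snd e = 2*i+4}. fl l e (\<zeta> - tr e)) = 
     fl l (2*i+2, 2*i+4) (\<zeta> - tr (2*i+2, 2*i+4)) + fl l (2*i+3, 2*i+4) (\<zeta> - tr (2*i+3, 2*i+4))"
    unfolding In_sets(2)[OF l i] using ne by simp
  also have "\<dots> = 2^(l - Suc i) * indicator (P (Suc i)) \<zeta>"
    unfolding fl_simps(3)[OF i] fl_simps(5)[OF i] tr_simps ind_P_Suc by (simp add: algebra_simps)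
  finally have In: "(\<Sum>e\<in>{e \<in> Ed l. snd e = 2*i+4}. fl l e (\<zeta> - tr e)) = 2^(l - Suc i) * indicator (P (Suc i)) \<zeta>" .
  have Out: "(\<Sum>e\<in>{e \<in> Ed l. fst e = 2*i+4}. fl l e \<zeta>) = 2^(l - Suc i) * indicator (P (Suc i)) \<zeta>"
  proof (cases "Suc i < l")
    case True
    have ne2: "(2*i+4, 2*i+6) \<noteq> (2*i+4, 2*i+5)" by simp
    have a: "(2*i+4, 2*i+6) = (2 * Suc i + 2, 2 * Suc i + 4)" "(2*i+4, 2*i+5) = (2 * Suc i + 2, 2 * Suc i + 3)" by simp_all
    have "(\<Sum>e\<in>{e \<in> Ed l. fst e = 2*i+4}. fl l e \<zeta>) = fl l (2*i+4, 2*i+6) \<zeta> + fl l (2*i+4, 2*i+5) \<zeta>"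
      unfolding In_sets(5)[OF l i True] using ne2 by simp
    also have "\<dots> = 2^(l - Suc (Suc i)) * indicator (P (Suc i)) \<zeta> + 2^(l - Suc (Suc i)) * indicator (P (Suc i)) \<zeta>"
      unfolding a fl_simps(3)[OF True] fl_simps(4)[OF True] ..
    also have "\<dots> = 2^(l - Suc i) * indicator (P (Suc i)) \<zeta>"
    proof -
      have "l - Suc i = Suc (l - Suc (Suc i))" using True by simp
      then have "(2::real)^(l - Suc i) = 2 * 2^(l - Suc (Suc i))" by (metis power_Suc)
      then show ?thesis by (simp add: algebra_simps)
    qed
    finally show ?thesis .
  next
    case False
    then have li: "l = Suc i" using i by simp
    have v: "2*i+4 = 2*l+2" using li by simp
    have "(\<Sum>e\<in>{e \<in> Ed l. fst e = 2*i+4}. fl l e \<zeta>) = fl l (2*l+2, 1) \<zeta>"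
      unfolding v In_sets(6)[OF l] by simp
    also have "\<dots> = 2^(l - Suc i) * indicator (P (Suc i)) \<zeta>" unfolding fl_simps(2) using li by simp
    finally show ?thesis .
  qed
  show ?thesis unfolding rate_def net_simps In Out by simp
qed

lemma V_cases:
  fixes v l :: nat
  assumes "v \<in> {0..2*l+2} - {0,1}"
  obtains "v = 2" | i where "i < l" "v = 2*i+4" | i where "i < l" "v = 2*i+3"
proof -
  have v: "2 \<le> v" "v \<le> 2*l+2" using assms by auto
  show ?thesis
  proof (cases "even v")
    case True
    then obtain j where j: "v = 2*j" by blast
    show ?thesis
    proof (cases "j = 1")
      case True then show ?thesis using j that by simp
    next
      case False
      then have "j - 2 < l" "v = 2*(j-2)+4" using j v by auto
      then show ?thesis using that by blast
    qed
  next
    case False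
    then obtain j where j: "v = 2*j+1" using oddE by blast
    then have "j - 1 < l" "v = 2*(j-1)+3" using j v by auto
    then show ?thesis using that by blast
  qed
qed

lemma fl_cons:
  assumes l: "1 \<le> l" and v: "v \<in> {0..2*l+2} - {0,1}"
  shows "rate (net l) (fl l) v \<zeta> = 0"
  using v
proof (cases rule: V_cases)
  case 1 then show ?thesis using cons_x0[OF l] by simp
next
  case (2 i) then show ?thesis using cons_x[OF l 2(1)] by simp
next
  case (3 i) then show ?thesis using cons_y[OF l 3(1)] by simp
qed

lemma fl_flow:
  assumes l: "1 \<le> l"
  shows "is_dyn_flow (net l) (fl l)"
  unfolding is_dyn_flow_def
proof (intro conjI ballI allI)
  fix e assume "e \<in> nedges (net l)"
  then show "fl l e \<in> borel_measurable lborel" using fl_meas by simp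
next
  fix e \<theta> assume e: "e \<in> nedges (net l)"
  then have e': "e \<in> Ed l" by simp
  show "if 0 \<le> \<theta> \<and> \<theta> \<le> nhorizon (net l) - ntransit (net l) e
        then 0 \<le> fl l e \<theta> \<and> fl l e \<theta> \<le> ncap (net l) e \<theta> else fl l e \<theta> = 0"
    using fl_supp[OF e', of \<theta>] fl_nonneg[of l e \<theta>] fl_le_cap[OF e', of \<theta>] by auto
next
  fix v \<Theta> assume v: "v \<in> nverts (net l) - {nsrc (net l), nsnk (net l)}"
  have "excess (net l) (fl l) v \<Theta> = (LINT \<zeta>:{0..\<Theta>}|lborel. rate (net l) (fl l) v \<zeta>)"
    by (simp add: excess_def rate_def)
  also have "\<dots> = 0" using fl_cons[OF l, of v] v by simp
  finally show "excess (net l) (fl l) v \<Theta> = 0" .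
qed

lemma cp_cont:
  assumes "\<theta> \<noteq> 1"
  shows "isCont (cp l e) \<theta>"
proof (cases "e = (0,2)")
  case False
  then have "cp l e = (\<lambda>_. if e = (2*l+2,1) then 1 else 2^l+1)" by (auto simp: cp_def fun_eq_iff)
  then show ?thesis by simp
next
  case True
  show ?thesis
  proof (cases "\<theta> < 1")
    case True
    have "continuous_on {..<1} (\<lambda>_::real. (2::real)^l+1)" by simp
    then have "continuous_on {..<1} (cp l e)"
      by (rule continuous_on_eq) (auto simp: cp_def \<open>e = (0,2)\<close>)
    then show ?thesis using True continuous_on_eq_continuous_at[OF open_lessThan] by auto
  next
    case False
    then have t: "1 < \<theta>" using assms by simp
    have "continuous_on {1<..} (\<lambda>_::real. (0::real))" by simp
    then have "continuous_on {1<..} (cp l e)"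
      by (rule continuous_on_eq) (auto simp: cp_def \<open>e = (0,2)\<close>)
    then show ?thesis using t continuous_on_eq_continuous_at[OF open_greaterThan] by auto
  qed
qed

lemma disc_sub: "{\<theta>\<in>S. \<not> continuous (at \<theta> within S) (cp l e)} \<subseteq> {1}"
  using cp_cont continuous_at_imp_continuous_at_within by blast

lemma cp_nonneg: "0 \<le> cp l e \<theta>" by (simp add: cp_def add_nonneg_nonneg)

lemma cp_le: "cp l e \<theta> \<le> 2^l + 1" using pow_ge1[of l] by (auto simp: cp_def)

lemma valid_net: "valid_network (net l)"
  unfolding valid_network_def net_simps
proof (intro conjI ballI)
  show "finite {0..2*l+2}" by simp
  show "Ed l \<subseteq> {0..2*l+2} \<times> {0..2*l+2}" by (rule Ed_sub)
  show "(0::nat) \<in> {0..2*l+2}" "(1::nat) \<in> {0..2*l+2}" "(0::nat) \<noteq> 1" by auto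
  show "0 \<le> (2::real)^Suc l" by simp
  show "\<And>e. e \<in> Ed l \<Longrightarrow> 0 \<le> tr e" by (simp add: tr_def)
  show "\<And>e \<theta>. e \<in> Ed l \<Longrightarrow> \<theta> \<in> {0..2^Suc l} \<Longrightarrow> 0 \<le> cp l e \<theta>" by (rule cp_nonneg)
  show "\<And>e. e \<in> Ed l \<Longrightarrow> finite {\<theta> \<in> {0..2^Suc l}. \<not> continuous (at \<theta> within {0..2^Suc l}) (cp l e)}"
    using disc_sub finite_subset by (metis finite.emptyI finite_insert)
qed

lemma good_net_l: "good_net (net l) (2^l+1)"
  unfolding good_net_def using valid_net cp_meas cp_le pw2[of l] by simp

lemma cutS_cut: "is_dyn_cut (net l) (cutS l)"
  unfolding is_dyn_cut_def net_simps
proof (intro conjI)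
  show "\<forall>v\<in>{0..2 * l + 2}. {\<theta>. cutS l v \<theta>} \<in> sets lborel" using cutS_meas by blast
qed (auto simp: cutS_def)

lemma two_form: "(2::nat) = 2*0+2" "(4::nat) = 2*0+4" by simp_all

lemma defect0:
  assumes e: "e \<in> Ed l"
  shows "defect (net l) (fl l) (cutS l) e \<theta> = 0"
proof (cases "\<theta> \<in> {0..2^Suc l}")
  case False
  moreover have "0 \<le> tr e" by (simp add: tr_def)
  ultimately have "\<theta> \<notin> {0..2^Suc l - tr e}" by auto
  then have "fl l e \<theta> = 0" by (rule fl_supp[OF e])
  then show ?thesis using False by (simp add: defect_def)
next
  case True
  then have nT: "\<not> 2^Suc l < \<theta>" by simp
  have ind: "indicator {0..2^Suc l} \<theta> = (1::real)" using True by simp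
  show ?thesis using e
  proof (cases rule: Ed_cases)
    case 1
    have s2: "cutS l 2 \<theta> = (\<theta> \<in> P 0)" using nT by (simp add: cutS_def)
    show ?thesis
    proof (cases "\<theta> \<in> P 0")
      case True
      then show ?thesis unfolding 1 defect_def using s2 by (simp add: sind_def tr_simps cutS_simps)
    next
      case False
      then have "1 \<le> \<theta>" using P_0[of \<theta>] \<open>\<theta> \<in> {0..2^Suc l}\<close> by auto
      then show ?thesis unfolding 1 defect_def using s2 False
        by (simp add: sind_def tr_simps cutS_simps fl_simps cp_simps ind)
    qed
  next
    case 2
    have s: "cutS l (2*l+2) \<theta> = (\<theta> \<in> P l)" using nT by (simp only: cutS_simps) simp
    have s1: "\<not> cutS l 1 (\<theta> + tr (2*l+2, 1))" using nT unfolding tr_simps cutS_simps by simp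
    show ?thesis unfolding 2 defect_def net_simps fl_simps cp_simps using s s1 ind
      by (cases "\<theta> \<in> P l") (simp_all add: sind_def)
  next
    case (3 i)
    have a: "2*i+4 = 2 * Suc i + 2" by simp
    have su: "cutS l (2*i+2) \<theta> = (\<theta> \<in> P i)" using nT by (simp only: cutS_simps) simp
    have t: "tr (2*i+2, 2*i+4) = 0" by (rule tr_simps)
    have sw: "cutS l (2*i+4) \<theta> = (\<theta> \<in> P (Suc i))"
      using nT unfolding a by (simp only: cutS_simps) simp
    show ?thesis unfolding 3(2) defect_def net_simps fl_simps(3)[OF 3(1)] t using su sw P_mono[of i]
      by (cases "\<theta> \<in> P i") (auto simp: sind_def)
  next
    case (4 i)
    have su: "cutS l (2*i+2) \<theta> = (\<theta> \<in> P i)" using nT by (simp only: cutS_simps) simp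
    have sw: "\<theta> \<in> P i \<Longrightarrow> cutS l (2*i+3) (\<theta> + tr (2*i+2, 2*i+3))"
      unfolding tr_simps by (simp only: cutS_simps) simp
    show ?thesis unfolding 4(2) defect_def net_simps fl_simps(4)[OF 4(1)] using su sw
      by (cases "\<theta> \<in> P i") (auto simp: sind_def)
  next
    case (5 i)
    have a: "2*i+4 = 2 * Suc i + 2" by simp
    have su: "cutS l (2*i+3) \<theta> = (\<theta> - 2^Suc i \<in> P i)" using nT by (simp only: cutS_simps) simp
    have t: "tr (2*i+3, 2*i+4) = 0" by (rule tr_simps)
    have sw: "cutS l (2*i+4) \<theta> = (\<theta> \<in> P (Suc i))"
      using nT unfolding a by (simp only: cutS_simps) simp
    show ?thesis unfolding 5(2) defect_def net_simps fl_simps(5)[OF 5(1)] t using su sw P_Suc[of \<theta> i]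
      by (cases "\<theta> - 2^Suc i \<in> P i") (auto simp: sind_def)
  qed
qed

lemma opt_equal:
  assumes l: "1 \<le> l"
  shows "flow_value (net l) (fl l) = cut_capacity (net l) (cutS l)"
proof -
  have "cut_capacity (net l) (cutS l) - flow_value (net l) (fl l) =
     (\<Sum>e\<in>Ed l. LINT \<theta>|lborel. defect (net l) (fl l) (cutS l) e \<theta>)"
    using duality[OF good_net_l fl_flow[OF l] cutS_cut] by simp
  also have "\<dots> = 0" using defect0 by simp
  finally show ?thesis by simp
qed

lemma max_flow:
  assumes l: "1 \<le> l"
  shows "is_max_dyn_flow (net l) (fl l)"
  unfolding is_max_dyn_flow_def
  using fl_flow[OF l] weak_duality[OF good_net_l _ cutS_cut] opt_equal[OF l] by auto

lemma min_cut:
  assumes l: "1 \<le> l"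
  shows "is_min_dyn_cut (net l) (cutS l)"
  unfolding is_min_dyn_cut_def
  using cutS_cut weak_duality[OF good_net_l fl_flow[OF l]] opt_equal[OF l] by auto

lemma T_ge: "i \<le> l \<Longrightarrow> \<theta> \<in> P i \<Longrightarrow> \<theta> \<in> {0..2^Suc l}"
proof -
  assume i: "i \<le> l" and t: "\<theta> \<in> P i"
  have "0 \<le> \<theta> \<and> \<theta> < 2^Suc i" using t by (rule P_bounds)
  then have a: "0 \<le> \<theta>" "\<theta> < 2^Suc i" by auto
  have "(2::real)^Suc i \<le> 2^Suc l" by (rule pow_le2[OF i])
  then have "\<theta> \<le> 2^Suc l" using a by linarith
  then show ?thesis using a by simp
qed

lemma cut_forcing:
  assumes l: "1 \<le> l" and S: "is_min_dyn_cut (net l) S"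
  shows "AE \<theta> in lborel. \<theta> \<in> {0..2^Suc l} \<longrightarrow> S (2*l+2) \<theta> = (if \<theta> \<in> P l then True else False)"
proof -
  have Sc: "is_dyn_cut (net l) S" using S by (simp add: is_min_dyn_cut_def)
  have "cut_capacity (net l) S \<le> cut_capacity (net l) (cutS l)" using S cutS_cut by (simp add: is_min_dyn_cut_def)
  moreover have "flow_value (net l) (fl l) \<le> cut_capacity (net l) S"
    by (rule weak_duality[OF good_net_l fl_flow[OF l] Sc])
  ultimately have eq: "flow_value (net l) (fl l) = cut_capacity (net l) S" using opt_equal[OF l] by simp
  have CS: "e \<in> Ed l \<Longrightarrow> AE \<theta> in lborel. defect (net l) (fl l) S e \<theta> = 0" for e
    using compl_slack[OF good_net_l fl_flow[OF l] Sc eq] by simp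
  have S0: "\<theta> \<in> {0..2^Suc l} \<Longrightarrow> S 0 \<theta>" for \<theta> using Sc by (simp add: is_dyn_cut_def)
  have S1: "\<theta> \<in> {0..2^Suc l} \<Longrightarrow> \<not> S 1 \<theta>" for \<theta> using Sc by (simp add: is_dyn_cut_def)
  have ind: "i \<le> l \<Longrightarrow> AE \<theta> in lborel. \<theta> \<in> P i \<longrightarrow> S (2*i+2) \<theta>" for i
  proof (induction i)
    case 0
    show ?case using CS[OF Ed_mem(4)]
    proof (eventually_elim)
      case (elim \<theta>)
      show ?case
      proof
        assume t: "\<theta> \<in> P 0"
        have tT: "\<theta> \<in> {0..2^Suc l}" by (rule T_ge[OF _ t]) simp
        have "fl l (0,2) \<theta> < cp l (0,2) \<theta>" by (rule fl_lt_cap[OF Ed_mem(4)]) (use t P_0 in auto)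
        then have "S (snd (0::nat,2::nat)) (\<theta> + tr (0,2))"
          using cs_fwd_imp[of "net l" "fl l" S "(0,2)" \<theta>] elim tT S0[OF tT] by simp
        then have "S 2 \<theta>" by (simp add: tr_simps)
        moreover have "(2*0+2::nat) = 2" by simp
        ultimately show "S (2*0+2) \<theta>" by metis
      qed
    qed
  next
    case (Suc i)
    then have i: "i < l" by simp
    have IH: "AE \<theta> in lborel. \<theta> \<in> P i \<longrightarrow> S (2*i+2) \<theta>" using Suc by simp
    let ?d = "(2::real)^Suc i"
    have A1: "AE \<theta> in lborel. \<theta> \<in> P i \<longrightarrow> S (2*i+4) \<theta>"
      using IH CS[OF Ed_mem(1)[OF i]]
    proof (eventually_elim)
      case (elim \<theta>)
      show ?case
      proof
        assume t: "\<theta> \<in> P i"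
        have tT: "\<theta> \<in> {0..2^Suc l}" by (rule T_ge[OF _ t]) (use i in simp)
        have "fl l (2*i+2, 2*i+4) \<theta> < cp l (2*i+2, 2*i+4) \<theta>" by (rule fl_lt_cap[OF Ed_mem(1)[OF i]]) auto
        then have "S (snd (2*i+2, 2*i+4)) (\<theta> + tr (2*i+2, 2*i+4))"
          using cs_fwd_imp[of "net l" "fl l" S "(2*i+2, 2*i+4)" \<theta>] elim tT t by simp
        then show "S (2*i+4) \<theta>" unfolding tr_simps by simp
      qed
    qed
    have A2: "AE \<theta> in lborel. \<theta> \<in> P i \<longrightarrow> S (2*i+3) (\<theta> + ?d)"
      using IH CS[OF Ed_mem(2)[OF i]]
    proof (eventually_elim)
      case (elim \<theta>)
      show ?case
      proof
        assume t: "\<theta> \<in> P i"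
        have tT: "\<theta> \<in> {0..2^Suc l}" by (rule T_ge[OF _ t]) (use i in simp)
        have "fl l (2*i+2, 2*i+3) \<theta> < cp l (2*i+2, 2*i+3) \<theta>" by (rule fl_lt_cap[OF Ed_mem(2)[OF i]]) auto
        then have "S (snd (2*i+2, 2*i+3)) (\<theta> + tr (2*i+2, 2*i+3))"
          using cs_fwd_imp[of "net l" "fl l" S "(2*i+2, 2*i+3)" \<theta>] elim tT t by simp
        then show "S (2*i+3) (\<theta> + ?d)" unfolding tr_simps by simp
      qed
    qed
    have A3: "AE \<theta> in lborel. \<theta> \<in> {0..2^Suc l} \<and> S (2*i+3) \<theta> \<longrightarrow> S (2*i+4) \<theta>"
      using CS[OF Ed_mem(3)[OF i]]
    proof (eventually_elim)
      case (elim \<theta>)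
      show ?case
      proof
        assume t: "\<theta> \<in> {0..2^Suc l} \<and> S (2*i+3) \<theta>"
        have "fl l (2*i+3, 2*i+4) \<theta> < cp l (2*i+3, 2*i+4) \<theta>" by (rule fl_lt_cap[OF Ed_mem(3)[OF i]]) auto
        then have "S (snd (2*i+3, 2*i+4)) (\<theta> + tr (2*i+3, 2*i+4))"
          using cs_fwd_imp[of "net l" "fl l" S "(2*i+3, 2*i+4)" \<theta>] elim t by simp
        then show "S (2*i+4) \<theta>" unfolding tr_simps by simp
      qed
    qed
    have A3': "AE \<theta> in lborel. \<theta> + ?d \<in> {0..2^Suc l} \<and> S (2*i+3) (\<theta> + ?d) \<longrightarrow> S (2*i+4) (\<theta> + ?d)"
      by (rule AE_translate[OF A3])
    have A4: "AE \<theta> in lborel. \<theta> \<in> P i \<longrightarrow> S (2*i+4) (\<theta> + ?d)"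
      using A2 A3'
    proof (eventually_elim)
      case (elim \<theta>)
      show ?case
      proof
        assume t: "\<theta> \<in> P i"
        have "\<theta> + ?d \<in> P (Suc i)" using P_Suc[of "\<theta> + ?d" i] t by simp
        then have "\<theta> + ?d \<in> {0..2^Suc l}" by (rule T_ge[rotated]) (use i in simp)
        then show "S (2*i+4) (\<theta> + ?d)" using elim t by simp
      qed
    qed
    have A5: "AE \<theta> in lborel. \<theta> + - ?d \<in> P i \<longrightarrow> S (2*i+4) (\<theta> + - ?d + ?d)"
      by (rule AE_translate[OF A4])
    have "AE \<theta> in lborel. \<theta> \<in> P (Suc i) \<longrightarrow> S (2*i+4) \<theta>"
      using A1 A5
    proof (eventually_elim)
      case (elim \<theta>)
      then show ?case using P_Suc[of \<theta> i] by auto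
    qed
    moreover have "2 * Suc i + 2 = 2*i+4" by simp
    ultimately show ?case by metis
  qed
  have Z: "AE \<theta> in lborel. \<theta> \<in> {0..2^Suc l} \<and> \<theta> \<notin> P l \<longrightarrow> \<not> S (2*l+2) \<theta>"
    using CS[OF Ed_mem(5)]
  proof (eventually_elim)
    case (elim \<theta>)
    show ?case
    proof (intro impI notI)
      assume t: "\<theta> \<in> {0..2^Suc l} \<and> \<theta> \<notin> P l" and s: "S (2*l+2) \<theta>"
      have "fl l (2*l+2, 1) \<theta> < cp l (2*l+2, 1) \<theta>" using t unfolding fl_simps cp_simps by simp
      then have "S (snd (2*l+2, 1)) (\<theta> + tr (2*l+2, 1))"
        using cs_fwd_imp[of "net l" "fl l" S "(2*l+2, 1)" \<theta>] elim t s by simp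
      then have "S 1 \<theta>" unfolding tr_simps by simp
      then show False using S1 t by simp
    qed
  qed
  have Il: "AE \<theta> in lborel. \<theta> \<in> P l \<longrightarrow> S (2*l+2) \<theta>" using ind[of l] by simp
  show ?thesis using Il Z
  proof (eventually_elim)
    case (elim \<theta>)
    then show ?case by auto
  qed
qed


lemma sink_sets: "{e \<in> Ed l. snd e = 1} = {(2*l+2, 1)}" "{e \<in> Ed l. fst e = 1} = {}"
  unfolding Ed_iff by (auto; presburger)+

lemma value_sink:
  assumes G: "is_dyn_flow (net l) g"
  shows "flow_value (net l) g = (LINT \<zeta>|lborel. indicator {0..2^Suc l} \<zeta> * g (2*l+2, 1) \<zeta>)"
proof -
  have t: "tr (Suc (Suc (2*l)), Suc 0) = 0" by (simp add: tr_def)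
  show ?thesis
    unfolding flow_value_def excess_def net_simps sink_sets set_lebesgue_integral_def
    by (simp add: t)
qed

lemma flow_forcing:
  assumes l: "1 \<le> l" and g: "is_max_dyn_flow (net l) g"
  shows "AE \<theta> in lborel. \<theta> \<in> {0..2^Suc l} \<longrightarrow> g (2*l+2, 1) \<theta> = (if \<theta> \<in> P l then 1 else 0)"
proof -
  let ?e = "(2*l+2, 1::nat)"
  have gf: "is_dyn_flow (net l) g" using g by (simp add: is_max_dyn_flow_def)
  have v1: "flow_value (net l) g \<le> flow_value (net l) (fl l)" using max_flow[OF l] gf by (simp add: is_max_dyn_flow_def)
  have v2: "flow_value (net l) (fl l) \<le> flow_value (net l) g" using g fl_flow[OF l] by (simp add: is_max_dyn_flow_def)
  have eq: "flow_value (net l) g = cut_capacity (net l) (cutS l)" using v1 v2 opt_equal[OF l] by simp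
  have e: "?e \<in> Ed l" by (rule Ed_mem(5))
  have CS: "AE \<theta> in lborel. defect (net l) g (cutS l) ?e \<theta> = 0"
    using compl_slack[OF good_net_l gf cutS_cut eq] e by simp
  have A: "AE \<theta> in lborel. \<theta> \<in> P l \<longrightarrow> g ?e \<theta> = 1"
    using CS
  proof (eventually_elim)
    case (elim \<theta>)
    show ?case
    proof
      assume t: "\<theta> \<in> P l"
      have tT: "\<theta> \<in> {0..2^Suc l}" by (rule T_ge[OF _ t]) simp
      have su: "cutS l (fst ?e) \<theta>" using t by (simp only: fst_conv cutS_simps) simp
      have sw: "\<not> cutS l (snd ?e) (\<theta> + ntransit (net l) ?e)" using tT unfolding snd_conv net_simps tr_simps cutS_simps by simp
      have "g ?e \<theta> = ncap (net l) ?e \<theta>" by (rule cs_fwd_sat[OF elim _ su sw]) (use tT in simp)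
      then show "g ?e \<theta> = 1" unfolding net_simps cp_simps .
    qed
  qed
  have gi: "integrable lborel (\<lambda>\<zeta>. indicator {0..2^Suc l} \<zeta> * g ?e \<zeta>)"
    using int_plain[OF good_net_l gf] e by simp
  have fi: "integrable lborel (\<lambda>\<zeta>. indicator {0..2^Suc l} \<zeta> * fl l ?e \<zeta>)"
    using int_plain[OF good_net_l fl_flow[OF l]] e by simp
  have "(LINT \<zeta>|lborel. indicator {0..2^Suc l} \<zeta> * g ?e \<zeta>) = (LINT \<zeta>|lborel. indicator {0..2^Suc l} \<zeta> * fl l ?e \<zeta>)"
    using v1 v2 value_sink[OF gf] value_sink[OF fl_flow[OF l]] by simp
  then have "(LINT \<zeta>|lborel. indicator {0..2^Suc l} \<zeta> * g ?e \<zeta> - indicator {0..2^Suc l} \<zeta> * fl l ?e \<zeta>) = 0"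
    using Bochner_Integration.integral_diff[OF gi fi] by simp
  moreover have nn: "AE \<zeta> in lborel. 0 \<le> indicator {0..2^Suc l} \<zeta> * g ?e \<zeta> - indicator {0..2^Suc l} \<zeta> * fl l ?e \<zeta>"
    using A
  proof (eventually_elim)
    case (elim \<zeta>)
    have e': "?e \<in> nedges (net l)" using e by simp
    have "0 \<le> g ?e \<zeta>" by (rule flow_bnd(2)[OF good_net_l gf e'])
    then show ?case using elim unfolding fl_simps by (auto simp: indicator_def)
  qed
  ultimately have "AE \<zeta> in lborel. indicator {0..2^Suc l} \<zeta> * g ?e \<zeta> - indicator {0..2^Suc l} \<zeta> * fl l ?e \<zeta> = 0"
    using integral_nonneg_eq_0_iff_AE[OF Bochner_Integration.integrable_diff[OF gi fi] nn] by simp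
  then show ?thesis
  proof (eventually_elim)
    case (elim \<zeta>)
    then show ?case unfolding fl_simps by (auto simp: indicator_def)
  qed
qed

lemma cut_complex:
  assumes l: "1 \<le> l" and S: "is_min_dyn_cut (net l) S"
  shows "enat (2^l) \<le> cut_complexity (net l) S"
proof -
  let ?g = "\<lambda>k::nat. (2*l+2, 2 * real k + 1)"
  have "enat (card {..<(2::nat)^l}) \<le> cut_complexity (net l) S"
    unfolding cut_complexity_def
  proof (rule ecard_ge[of ?g])
    show "inj_on ?g {..<2^l}" by (auto simp: inj_on_def)
    show "finite {..<(2::nat)^l}" by simp
    show "?g ` {..<2^l} \<subseteq> {(v, \<Theta>). v \<in> nverts (net l) \<and> 0 < \<Theta> \<and> ess_change {0..} (S v) \<Theta>}"
    proof
      fix x assume "x \<in> ?g ` {..<2^l}"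
      then obtain k where k: "k < 2^l" and x: "x = ?g k" by auto
      have "ess_change {0..} (S (2*l+2)) (2 * real k + 1)"
        by (rule many_changes[OF cut_forcing[OF l S]]) (use k in auto)
      then show "x \<in> {(v, \<Theta>). v \<in> nverts (net l) \<and> 0 < \<Theta> \<and> ess_change {0..} (S v) \<Theta>}"
        unfolding x by simp
    qed
  qed
  then show ?thesis by simp
qed

lemma flow_complex:
  assumes l: "1 \<le> l" and g: "is_max_dyn_flow (net l) g"
  shows "enat (2^l) \<le> flow_complexity (net l) g"
proof -
  let ?e = "(2*l+2, 1::nat)"
  let ?g = "\<lambda>k::nat. (?e, 2 * real k + 1)"
  have "enat (card {..<(2::nat)^l}) \<le> flow_complexity (net l) g"
    unfolding flow_complexity_def
  proof (rule ecard_ge[of ?g])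
    show "inj_on ?g {..<2^l}" by (auto simp: inj_on_def)
    show "finite {..<(2::nat)^l}" by simp
    show "?g ` {..<2^l} \<subseteq> {(e, \<Theta>). e \<in> nedges (net l) \<and> 0 < \<Theta> \<and> \<Theta> < nhorizon (net l) - ntransit (net l) e \<and>
                    ess_change {0..nhorizon (net l) - ntransit (net l) e} (g e) \<Theta>}"
    proof
      fix x assume "x \<in> ?g ` {..<2^l}"
      then obtain k where k: "k < 2^l" and x: "x = ?g k" by auto
      have "ess_change {0..2^Suc l} (g ?e) (2 * real k + 1)"
        by (rule many_changes[OF flow_forcing[OF l g]]) (use k in auto)
      moreover have "2 * real k + 2 \<le> 2^Suc l" using k_bound[of k l] k by simp
      moreover have "?e \<in> nedges (net l)" using Ed_mem(5)[of l] by simp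
      moreover have "ntransit (net l) ?e = 0" unfolding net_simps by (rule tr_simps)
      ultimately show "x \<in> {(e, \<Theta>). e \<in> nedges (net l) \<and> 0 < \<Theta> \<and> \<Theta> < nhorizon (net l) - ntransit (net l) e \<and>
                    ess_change {0..nhorizon (net l) - ntransit (net l) e} (g e) \<Theta>}"
        unfolding x by auto
    qed
  qed
  then show ?thesis by simp
qed

lemma acyc: "acyclic (Ed l)"
proof (rule acyclic_rank[where r="\<lambda>v. if v = 1 then 2*l+3 else v"])
  show "\<forall>(a, b)\<in>Ed l. (if a = 1 then 2*l+3 else a) < (if b = 1 then 2*l+3 else b)"
  proof (intro ballI)
    fix x assume "x \<in> Ed l"
    then show "case x of (a, b) \<Rightarrow> (if a = 1 then 2*l+3 else a) < (if b = 1 then 2*l+3 else b)"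
      by (cases rule: Ed_cases) auto
  qed
qed

lemma one_change: "one_capacity_change (net l)"
proof -
  have A: "\<forall>\<theta>\<in>{0..2^Suc l}. \<theta> \<noteq> 1 \<longrightarrow> cp l (0,2) \<theta> = (if \<theta> < (1::real) then 2^l+1 else 0)"
    by (simp add: cp_simps)
  have B: "\<forall>e\<in>Ed l - {(0,2)}. \<exists>c. \<forall>\<theta>\<in>{0..2^Suc l}. cp l e \<theta> = c"
  proof
    fix e assume e: "e \<in> Ed l - {(0,2)}"
    show "\<exists>c. \<forall>\<theta>\<in>{0..2^Suc l}. cp l e \<theta> = c"
      using e by (intro exI[of _ "cp l e 0"]) (auto simp: cp_def)
  qed
  have "(2::real)^Suc l = 2 * 2^l" by simp
  then have C: "(1::real) < 2 ^ Suc l" using pow_ge1[of l] by linarith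
  have D: "(2::real)^l + 1 \<noteq> 0" using pw2[of l] by simp
  show ?thesis unfolding one_capacity_change_def net_simps
    by (intro bexI[of _ "(0,2)"] exI[of _ "1::real"] exI[of _ "2^l+1::real"] exI[of _ "0::real"] conjI)
      (use A B C D Ed_mem(4) in auto)
qed

lemma nat_pow: "(2::real)^n \<in> \<nat>"
proof -
  have "(2::real)^n = real (2^n)" by simp
  then show ?thesis by (metis of_nat_in_Nats)
qed

lemma discrete: "discrete_time (net l)"
  unfolding discrete_time_def net_simps
proof (intro conjI ballI impI)
  show "(2::real) ^ Suc l \<in> \<nat>" by (rule nat_pow)
  fix e assume "e \<in> Ed l"
  show "tr e \<in> \<nat>" by (simp add: tr_def nat_pow)
  fix \<theta> :: real assume "\<theta> \<in> {0..2^Suc l}" "\<not> continuous (at \<theta> within {0..2^Suc l}) (cp l e)"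
  then have "\<theta> = 1" using disc_sub[of "{0..2^Suc l}" l e] by auto
  then show "\<theta> \<in> \<nat>" by simp
qed

lemma integral_caps: "integral_capacities (net l)"
  unfolding integral_capacities_def net_simps
proof (intro ballI)
  fix e and \<theta> :: real assume "e \<in> Ed l" "\<theta> \<in> {0..2^Suc l}"
  have a: "(2::real)^l + 1 \<in> \<nat>" using nat_pow[of l] by (simp add: Nats_add)
  show "cp l e \<theta> \<in> \<nat>" using a by (auto simp: cp_def)
qed

lemma card_Ed: "card (Ed l) \<le> 3*l + 2"
proof -
  define A where "A = {(0::nat,2::nat), (2*l+2, 1)}"
  define B where "B = (\<lambda>i. (2*i+2, 2*i+4)) ` {..<l}"
  define C where "C = (\<lambda>i. (2*i+2, 2*i+3)) ` {..<l}"
  define D where "D = (\<lambda>i. (2*i+3, 2*i+4)) ` {..<l}"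
  have E: "Ed l = A \<union> B \<union> C \<union> D" unfolding Ed_def A_def B_def C_def D_def ..
  have 1: "card (A \<union> B \<union> C \<union> D) \<le> card (A \<union> B \<union> C) + card D" by (rule card_Un_le)
  have 2: "card (A \<union> B \<union> C) \<le> card (A \<union> B) + card C" by (rule card_Un_le)
  have 3: "card (A \<union> B) \<le> card A + card B" by (rule card_Un_le)
  have a: "card A \<le> 2" unfolding A_def by (rule card_insert_le_m1) auto
  have b: "card B \<le> l" unfolding B_def using card_image_le[of "{..<l}"] by simp
  have c: "card C \<le> l" unfolding C_def using card_image_le[of "{..<l}"] by simp
  have d: "card D \<le> l" unfolding D_def using card_image_le[of "{..<l}"] by simp
  show ?thesis unfolding E using 1 2 3 a b c d by linarith
qed

lemma pow_mono_real: "m \<le> n \<Longrightarrow> (2::real)^m \<le> 2^n" by (intro power_increasing) auto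

lemma size_ok:
  assumes l: "1 \<le> l"
  shows "size_bounded (net l) (5 * l)"
proof -
  have 1: "card {0..2*l+2} \<le> 5*l" using l by simp
  have 2: "card (Ed l) \<le> 5*l" using card_Ed[of l] l by simp
  have 3: "(2::real)^Suc l \<le> 2^(5*l)" using l by (intro pow_mono_real) simp
  have 4: "\<forall>e\<in>Ed l. tr e \<le> 2^(5*l)"
  proof
    fix e assume e: "e \<in> Ed l"
    show "tr e \<le> 2^(5*l)"
      using e
    proof (cases rule: Ed_cases)
      case (4 i)
      have "tr e = 2^Suc i" unfolding 4 by (rule tr_simps)
      also have "\<dots> \<le> 2^(5*l)" using 4 by (intro pow_mono_real) simp
      finally show ?thesis .
    qed (auto simp: tr_def)
  qed
  have 5: "\<forall>e\<in>Ed l. \<forall>\<theta>\<in>{0..2^Suc l}. cp l e \<theta> \<le> 2^(5*l)"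
  proof (intro ballI)
    fix e and \<theta> :: real
    have "cp l e \<theta> \<le> 2^l + 1" by (rule cp_le)
    also have "\<dots> \<le> 2^l + 2^l" using pow_ge1[of l] by simp
    also have "\<dots> = 2^Suc l" by simp
    also have "\<dots> \<le> 2^(5*l)" using l by (intro pow_mono_real) simp
    finally show "cp l e \<theta> \<le> 2^(5*l)" .
  qed
  show ?thesis unfolding size_bounded_def net_simps using 1 2 3 4 5 by blast
qed

theorem theorem4:
  shows "\<exists>c k :: nat. \<forall>l::nat. 1 \<le> l \<longrightarrow>
    (\<exists>N. valid_network N \<and> acyclic (nedges N) \<and> one_capacity_change N \<and>
         discrete_time N \<and> integral_capacities N \<and> size_bounded N (c * l ^ k) \<and>
         (\<exists>f. is_max_dyn_flow N f) \<and> (\<exists>S. is_min_dyn_cut N S) \<and>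
         (\<forall>S. is_min_dyn_cut N S \<longrightarrow> enat (2 ^ l) \<le> cut_complexity N S) \<and>
         (\<forall>f. is_max_dyn_flow N f \<longrightarrow> enat (2 ^ l) \<le> flow_complexity N f))"
proof -
  have "\<forall>l::nat. 1 \<le> l \<longrightarrow>
    (\<exists>N. valid_network N \<and> acyclic (nedges N) \<and> one_capacity_change N \<and>
         discrete_time N \<and> integral_capacities N \<and> size_bounded N (5 * l ^ 1) \<and>
         (\<exists>f. is_max_dyn_flow N f) \<and> (\<exists>S. is_min_dyn_cut N S) \<and>
         (\<forall>S. is_min_dyn_cut N S \<longrightarrow> enat (2 ^ l) \<le> cut_complexity N S) \<and>
         (\<forall>f. is_max_dyn_flow N f \<longrightarrow> enat (2 ^ l) \<le> flow_complexity N f))"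
  proof (intro allI impI)
    fix l :: nat assume l: "1 \<le> l"
    have a1: "valid_network (net l)" by (rule valid_net)
    have a2: "acyclic (nedges (net l))" using acyc by simp
    have a3: "one_capacity_change (net l)" by (rule one_change)
    have a4: "discrete_time (net l)" by (rule discrete)
    have a5: "integral_capacities (net l)" by (rule integral_caps)
    have a6: "size_bounded (net l) (5 * l ^ 1)" using size_ok[OF l] by simp
    have a7: "\<exists>f. is_max_dyn_flow (net l) f" using max_flow[OF l] by blast
    have a8: "\<exists>S. is_min_dyn_cut (net l) S" using min_cut[OF l] by blast
    have a9: "\<forall>S. is_min_dyn_cut (net l) S \<longrightarrow> enat (2 ^ l) \<le> cut_complexity (net l) S"
      using cut_complex[OF l] by blast
    have a10: "\<forall>f. is_max_dyn_flow (net l) f \<longrightarrow> enat (2 ^ l) \<le> flow_complexity (net l) f"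
      using flow_complex[OF l] by blast
    show "\<exists>N. valid_network N \<and> acyclic (nedges N) \<and> one_capacity_change N \<and>
         discrete_time N \<and> integral_capacities N \<and> size_bounded N (5 * l ^ 1) \<and>
         (\<exists>f. is_max_dyn_flow N f) \<and> (\<exists>S. is_min_dyn_cut N S) \<and>
         (\<forall>S. is_min_dyn_cut N S \<longrightarrow> enat (2 ^ l) \<le> cut_complexity N S) \<and>
         (\<forall>f. is_max_dyn_flow N f \<longrightarrow> enat (2 ^ l) \<le> flow_complexity N f)"
      using a1 a2 a3 a4 a5 a6 a7 a8 a9 a10 by blast
  qed
  then show ?thesis by blast
qed

end
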